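(* Let $\Phi:\mathbb{R}^2\to[0,\infty[$ be measurable. (a) (Non-relativistic case.) Let $U\in C^1(]0,\infty[)$ satisfy $$U'(r)=\frac{4\pi}{r^2}\int_0^r s^2\rho(s)\,ds,\qquad r>0,$$ where $$\rho(r)=\rho(x)=\int_{\mathbb{R}^3} f(x,v)\,dv,\qquad f(x,v)=\Phi\big(E(x,v),L(x,v)\big),$$ with $E(x,v)=\tfrac12|v|^2+U(|x|)$, $L(x,v)=|x\times v|^2$ and $r=|x|$. Assume that the mass $M=\int_{\mathbb{R}^3}\rho(x)\,dx$ is finite. Then $U_\infty=\lim_{r\to\infty}U(r)$ exists and is finite, and $\Phi(E,L)=0$ for almost every $(E,L)$ with $E>U_\infty$ and $L>0$. (b) (Relativistic case.) Let $\lambda,\mu\in C^1(]0,\infty[)$ satisfy, for $r>0$, $$e^{-2\lambda}(2r\lambda'-1)+1=8\pi r^2\rho,\qquad e^{-2\lambda}(2r\mu'+1)-1=8\pi r^2 p,$$ where $$\rho(r)=\int_{\mathbb{R}^3}\sqrt{1+|v|^2}\,f(x,v)\,dv,\qquad p(r)=\int_{\mathbb{R}^3}\Big(\frac{x\cdot v}{r}\Big)^2 f(x,v)\,\frac{dv}{\sqrt{1+|v|^2}},$$ with $f(x,v)=\Phi(E(x,v),L(x,v))$, $E(x,v)=e^{\mu(|x|)}\sqrt{1+|v|^2}$, $L(x,v)=|x\times v|^2$ and $r=|x|$. Assume moreover the regular-center condition, in the form $e^{-2\lambda(r)}=1-2m(r)/r$ for all $r>0$, where $m(r)=4\pi\int_0^r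 s^2\rho(s)\,ds$. Assume that the ADM mass $M=\int_{\mathbb{R}^3}\rho(x)\,dx$ is finite. Then $\mu_\infty=\lim_{r\to\infty}\mu(r)$ exists and is finite, and $\Phi(E,L)=0$ for almost every $(E,L)$ with $E>e^{\mu_\infty}$ and $L>0$.
   Context: Here $x,v\in\mathbb{R}^3$, $\cdot$ is the Euclidean inner product and $\times$ the cross product. The functions $\rho$ and $p$ depend only on $r=|x|$ because of spherical symmetry. *)

theory Defs
  imports "HOL-Analysis.Analysis"
begin

definition angmom :: "real^3 \<Rightarrow> real^3 \<Rightarrow> real" where
  "angmom x v = (norm (cross3 x v))^2"

text \<open>The point (r,0,0) of R^3, used to evaluate spherically symmetric functions at radius r.\<close>
definition radpt :: "real \<Rightarrow> real^3" where
  "radpt r = vector [r, 0, 0]"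

definition nr_f :: "(real \<times> real \<Rightarrow> real) \<Rightarrow> (real \<Rightarrow> real) \<Rightarrow> real^3 \<Rightarrow> real^3 \<Rightarrow> real" where
  "nr_f Phi U x v = Phi (1/2 * (norm v)^2 + U (norm x), angmom x v)"

definition nr_rho :: "(real \<times> real \<Rightarrow> real) \<Rightarrow> (real \<Rightarrow> real) \<Rightarrow> real^3 \<Rightarrow> ennreal" where
  "nr_rho Phi U x = (\<integral>\<^sup>+ v. ennreal (nr_f Phi U x v) \<partial>lborel)"

definition rel_f :: "(real \<times> real \<Rightarrow> real) \<Rightarrow> (real \<Rightarrow> real) \<Rightarrow> real^3 \<Rightarrow> real^3 \<Rightarrow> real" where
  "rel_f Phi mu x v = Phi (exp (mu (norm x)) * sqrt (1 + (norm v)^2), angmom x v)"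

definition rel_rho :: "(real \<times> real \<Rightarrow> real) \<Rightarrow> (real \<Rightarrow> real) \<Rightarrow> real^3 \<Rightarrow> ennreal" where
  "rel_rho Phi mu x = (\<integral>\<^sup>+ v. ennreal (sqrt (1 + (norm v)^2) * rel_f Phi mu x v) \<partial>lborel)"

definition rel_p :: "(real \<times> real \<Rightarrow> real) \<Rightarrow> (real \<Rightarrow> real) \<Rightarrow> real^3 \<Rightarrow> ennreal" where
  "rel_p Phi mu x = (\<integral>\<^sup>+ v. ennreal (((x \<bullet> v) / norm x)^2 * rel_f Phi mu x v
                                         / sqrt (1 + (norm v)^2)) \<partial>lborel)"

end

theory Submission
  imports Defs
begin

lemma lborel_orth_invariant:
  fixes T :: "real^3 \<Rightarrow> real^3"
  assumes T: "orthogonal_transformation T"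
  shows "distr lborel borel T = lborel"
proof (rule lborel_eqI[symmetric])
  have lin: "linear T" using T by (simp add: orthogonal_transformation_linear)
  have Tm[measurable]: "T \<in> borel_measurable borel"
    using lin by (simp add: borel_measurable_continuous_onI linear_continuous_on linear_linear)
  obtain Ti where Ti: "orthogonal_transformation Ti" "\<And>x. Ti (T x) = x" "\<And>x. T (Ti x) = x"
    by (metis T orthogonal_transformation_inv orthogonal_transformation_bij bij_inv_eq_iff)
  fix l u :: "real^3"
  assume lu: "\<And>b. b \<in> Basis \<Longrightarrow> l \<bullet> b \<le> u \<bullet> b"
  have pre: "T -` box l u = Ti ` box l u"
    using Ti by (auto simp: image_iff) (metis)
  have "emeasure (distr lborel borel T) (box l u) = emeasure lborel (Ti ` box l u)"
    by (simp add: emeasure_distr pre)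
  also have "\<dots> = emeasure lebesgue (Ti ` box l u)"
  proof -
    have "Ti ` box l u \<in> sets borel"
      using pre[symmetric] by (metis Tm measurable_sets_borel borel_open open_box)
    then show ?thesis by (simp add: emeasure_completion)
  qed
  also have "\<dots> = ennreal (measure lebesgue (Ti ` box l u))"
    using measurable_orthogonal_image[OF Ti(1), of "box l u"]
    by (simp add: emeasure_eq_measure2)
  also have "\<dots> = ennreal (measure lebesgue (box l u))"
    using measure_orthogonal_image[OF Ti(1), of "box l u"] by simp
  also have "\<dots> = emeasure lborel (box l u)"
    by (simp add: emeasure_eq_measure2 emeasure_completion measure_completion del: emeasure_lborel_box_eq)
  also have "\<dots> = (\<Prod>b\<in>Basis. (u - l) \<bullet> b)"
    using lu by (simp add: emeasure_lborel_box_eq)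
  finally show "emeasure (distr lborel borel T) (box l u) = (\<Prod>b\<in>Basis. (u - l) \<bullet> b)" .
qed simp

lemma angmom_measurable[measurable]:
  fixes f g :: "'a \<Rightarrow> real^3"
  assumes [measurable]: "f \<in> borel_measurable M" "g \<in> borel_measurable M"
  shows "(\<lambda>p. angmom (f p) (g p)) \<in> borel_measurable M"
proof -
  have "continuous_on UNIV (\<lambda>x::(real^3)\<times>(real^3). (norm (cross3 (fst x) (snd x)))^2)"
    by (intro continuous_intros continuous_on_cross)
  from borel_measurable_continuous_Pair[OF assms this] show ?thesis
    by (simp add: angmom_def)
qed

lemma angmom_orth:
  assumes T: "orthogonal_transformation T"
  shows "angmom (T x) (T v) = angmom x v"
  unfolding angmom_def cross_orthogonal_transformation[OF T]
  using T by (simp add: orthogonal_transformation_norm)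

lemma radpt_axis: "radpt r = r *\<^sub>R axis 1 1"
  by (simp add: radpt_def vec_eq_iff forall_3 axis_def)

lemma norm_radpt[simp]: "norm (radpt r) = \<bar>r\<bar>"
  by (simp add: radpt_axis)

lemma nn_integral_radial:
  fixes F :: "real \<Rightarrow> real \<Rightarrow> ennreal"
  assumes [measurable]: "case_prod F \<in> borel_measurable borel"
  shows "(\<integral>\<^sup>+v. F (norm v) (angmom x v) \<partial>lborel) = (\<integral>\<^sup>+v. F (norm v) (angmom (radpt (norm x)) v) \<partial>lborel)"
proof -
  obtain T :: "real^3 \<Rightarrow> real^3" where T: "orthogonal_transformation T" "T (norm x *\<^sub>R axis 1 1) = x"
    by (rule rotation_rightward_line)
  have lin: "linear T" using T by (simp add: orthogonal_transformation_linear)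
  have Tm[measurable]: "T \<in> borel_measurable borel"
    using lin by (simp add: borel_measurable_continuous_onI linear_continuous_on linear_linear)
  have "(\<integral>\<^sup>+v. F (norm v) (angmom x v) \<partial>lborel) = (\<integral>\<^sup>+v. F (norm v) (angmom x v) \<partial>distr lborel borel T)"
    by (simp add: lborel_orth_invariant[OF T(1)])
  also have "\<dots> = (\<integral>\<^sup>+v. F (norm (T v)) (angmom x (T v)) \<partial>lborel)"
  proof -
    have "(\<lambda>v. case_prod F (norm v, angmom x v)) \<in> borel_measurable borel" by measurable
    then show ?thesis by (subst nn_integral_distr) auto
  qed
  also have "\<dots> = (\<integral>\<^sup>+v. F (norm v) (angmom (radpt (norm x)) v) \<partial>lborel)"
    apply (rule nn_integral_cong)
    using T angmom_orth[OF T(1), of "norm x *\<^sub>R axis 1 1"]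
    by (simp add: orthogonal_transformation_norm radpt_axis)
  finally show ?thesis .
qed

lemma unit_ball_vol_3: "unit_ball_vol 3 = 4/3 * pi"
  by (simp add: eval_unit_ball_vol)

lemma distr_norm3:
  "distr (lborel::(real^3) measure) borel norm = density lborel (\<lambda>s. ennreal (4 * pi * s ^ 2) * indicator {0..} s)"
proof (rule measure_eqI_generator_eq[where E="range atMost" and \<Omega>=UNIV and A="\<lambda>i. {..real i}"])
  show "Int_stable (range atMost :: real set set)"
    by (auto simp: Int_stable_def)
  show "range atMost \<subseteq> Pow (UNIV :: real set)" by auto
  show "sets (distr (lborel::(real^3) measure) borel norm) = sigma_sets UNIV (range atMost)"
    by (simp add: borel_eq_atMost[where 'a=real])
  show "sets (density lborel (\<lambda>s. ennreal (4 * pi * s ^ 2) * indicator {0..} s)) = sigma_sets UNIV (range atMost)"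
    by (simp add: borel_eq_atMost[where 'a=real])
  show "range (\<lambda>i::nat. {..real i}) \<subseteq> range atMost" by auto
  show "(\<Union>i::nat. {..real i}) = UNIV"
    by (auto intro: real_arch_simple)
  have E: "emeasure (distr (lborel::(real^3) measure) borel norm) {..b} = ennreal (4/3 * pi * (max b 0) ^ 3)" for b :: real
  proof (cases "b \<ge> 0")
    case True
    have "norm -` {..b} = (cball 0 b :: (real^3) set)" by auto
    then show ?thesis using True
      by (simp add: emeasure_distr emeasure_cball unit_ball_vol_3)
  next
    case False
    then have "norm -` {..b} = ({} :: (real^3) set)" using norm_ge_zero by (auto, smt (verit) norm_ge_zero)
    then show ?thesis using False
      by (simp add: emeasure_distr)
  qed
  show "emeasure (distr (lborel::(real^3) measure) borel norm) {..real i} \<noteq> \<infinity>" for i :: nat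
    by (simp add: E)
  fix X assume "X \<in> range (atMost :: real \<Rightarrow> real set)"
  then obtain b where X: "X = {..b}" by auto
  have "emeasure (density lborel (\<lambda>s. ennreal (4 * pi * s ^ 2) * indicator {0..} s)) {..b}
      = (\<integral>\<^sup>+s. ennreal (4 * pi * s ^ 2) * indicator {0..max b 0} s \<partial>lborel)"
    apply (simp add: emeasure_density)
    apply (rule nn_integral_cong)
    by (auto split: split_indicator)
  also have "\<dots> = ennreal (4/3 * pi * (max b 0) ^ 3)"
  proof -
    have "(\<integral>\<^sup>+s. ennreal (4 * pi * s ^ 2) * indicator {0..max b 0} s \<partial>lborel) = 
       (\<lambda>s. 4/3 * pi * s ^ 3) (max b 0) - (\<lambda>s. 4/3 * pi * s ^ 3) 0"
      by (rule nn_integral_FTC_Icc) (auto intro!: derivative_eq_intros simp: field_simps power2_eq_square)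
    then show ?thesis by simp
  qed
  finally show "emeasure (distr (lborel::(real^3) measure) borel norm) X =
      emeasure (density lborel (\<lambda>s. ennreal (4 * pi * s ^ 2) * indicator {0..} s)) X"
    by (simp add: X E)
qed

lemma nn_integral_polar3:
  fixes g :: "real \<Rightarrow> ennreal"
  assumes [measurable]: "g \<in> borel_measurable borel"
  shows "(\<integral>\<^sup>+x. g (norm (x::real^3)) \<partial>lborel) = (\<integral>\<^sup>+s. ennreal (4 * pi * s ^ 2) * indicator {0..} s * g s \<partial>lborel)"
proof -
  have "(\<integral>\<^sup>+x. g (norm (x::real^3)) \<partial>lborel) = (\<integral>\<^sup>+s. g s \<partial>distr (lborel::(real^3) measure) borel norm)"
    by (subst nn_integral_distr) auto
  also have "\<dots> = (\<integral>\<^sup>+s. ennreal (4 * pi * s ^ 2) * indicator {0..} s * g s \<partial>lborel)"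
    unfolding distr_norm3 by (subst nn_integral_density) auto
  finally show ?thesis .
qed

definition vec3 :: "real \<Rightarrow> real \<Rightarrow> real \<Rightarrow> real^3" where
  "vec3 a b c = a *\<^sub>R axis 1 1 + b *\<^sub>R axis 2 1 + c *\<^sub>R axis 3 1"

lemma vec3_nth[simp]: "vec3 a b c $ 1 = a" "vec3 a b c $ 2 = b" "vec3 a b c $ 3 = c"
  by (simp_all add: vec3_def axis_def)

lemma vec3_measurable[measurable]:
  assumes [measurable]: "f \<in> borel_measurable M" "g \<in> borel_measurable M" "h \<in> borel_measurable M"
  shows "(\<lambda>x. vec3 (f x) (g x) (h x)) \<in> borel_measurable M"
  unfolding vec3_def by measurable

lemma prod_Basis_vec3: "(\<Prod>b\<in>(Basis::(real^3) set). f b) = f (axis 1 1) * f (axis 2 1) * f (axis 3 1)"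
proof -
  have B: "(Basis::(real^3) set) = (\<lambda>i. axis i 1) ` UNIV"
    by (auto simp: Basis_vec_def)
  have "inj (\<lambda>i::3. axis i (1::real))"
    by (auto intro!: injI simp: axis_eq_axis)
  then have "(\<Prod>b\<in>(Basis::(real^3) set). f b) = (\<Prod>i\<in>UNIV. f (axis i 1))"
    unfolding B by (simp add: prod.reindex)
  also have "\<dots> = f (axis 1 1) * f (axis 2 1) * f (axis 3 1)"
    unfolding UNIV_3 by (simp add: mult.assoc)
  finally show ?thesis .
qed

lemma box_vec3: "(\<lambda>(a,b,c). vec3 a b c) -` box l u =
    {l$1<..<u$1} \<times> {l$2<..<u$2} \<times> {l$3<..<u$3}"
  by (auto simp: mem_box_cart forall_3)

lemma lborel3_eq:
  "distr (lborel \<Otimes>\<^sub>M (lborel \<Otimes>\<^sub>M lborel)) borel (\<lambda>(a,b,c). vec3 a b c) = lborel"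
proof (rule lborel_eqI[symmetric])
  fix l u :: "real^3"
  assume lu: "\<And>b. b \<in> Basis \<Longrightarrow> l \<bullet> b \<le> u \<bullet> b"
  then have le: "l$i \<le> u$i" for i
  proof -
    have "axis i 1 \<in> (Basis::(real^3) set)" by (auto simp: Basis_vec_def)
    from lu[OF this] show ?thesis by (simp add: inner_axis)
  qed
  have m: "(\<lambda>(a,b,c). vec3 a b c) \<in> borel_measurable (lborel \<Otimes>\<^sub>M (lborel \<Otimes>\<^sub>M lborel))"
    by measurable
  show "emeasure (distr (lborel \<Otimes>\<^sub>M (lborel \<Otimes>\<^sub>M lborel)) borel (\<lambda>(a,b,c). vec3 a b c)) (box l u) =
     ennreal (\<Prod>b\<in>Basis. (u - l) \<bullet> b)"
  proof -
    have "emeasure (lborel \<Otimes>\<^sub>M (lborel \<Otimes>\<^sub>M lborel)) ({l$1<..<u$1} \<times> {l$2<..<u$2} \<times> {l$3<..<u$3})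
      = emeasure (lborel \<Otimes>\<^sub>M (lborel::(real\<times>real) measure)) ({l$1<..<u$1} \<times> ({l$2<..<u$2} \<times> {l$3<..<u$3}))"
      by (simp add: lborel_prod)
    also have "\<dots> = emeasure lborel {l$1<..<u$1} * emeasure (lborel::(real\<times>real) measure) ({l$2<..<u$2} \<times> {l$3<..<u$3})"
      by (rule lborel.emeasure_pair_measure_Times) (auto intro!: borel_open open_Times)
    also have "emeasure (lborel::(real\<times>real) measure) ({l$2<..<u$2} \<times> {l$3<..<u$3}) = 
       emeasure (lborel \<Otimes>\<^sub>M lborel) ({l$2<..<u$2} \<times> {l$3<..<u$3})"
      by (simp add: lborel_prod)
    also have "\<dots> = emeasure lborel {l$2<..<u$2} * emeasure lborel {l$3<..<u$3}"
      by (rule lborel.emeasure_pair_measure_Times) auto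
    finally show ?thesis
      using m le
      by (simp add: emeasure_distr box_vec3 space_pair_measure 
        prod_Basis_vec3 cart_eq_inner_axis[symmetric] ennreal_mult mult.assoc)
  qed
qed simp

lemma sets_lborel_pair3: "sets (lborel \<Otimes>\<^sub>M (lborel::(real\<times>real) measure)) = sets (borel :: (real\<times>real\<times>real) measure)"
  by (metis borel_prod sets_lborel sets_pair_measure_cong)

lemma nn_integral_lborel3:
  fixes h :: "real^3 \<Rightarrow> ennreal"
  assumes [measurable]: "h \<in> borel_measurable borel"
  shows "(\<integral>\<^sup>+v. h v \<partial>lborel) = (\<integral>\<^sup>+a. \<integral>\<^sup>+b. \<integral>\<^sup>+c. h (vec3 a b c) \<partial>lborel \<partial>lborel \<partial>lborel)"
proof -
  have "(\<integral>\<^sup>+v. h v \<partial>lborel) = (\<integral>\<^sup>+v. h v \<partial>distr (lborel \<Otimes>\<^sub>M (lborel \<Otimes>\<^sub>M lborel)) borel (\<lambda>(a,b,c). vec3 a b c))"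
    by (simp add: lborel3_eq)
  also have "\<dots> = (\<integral>\<^sup>+p. h (case p of (a,b,c) \<Rightarrow> vec3 a b c) \<partial>(lborel \<Otimes>\<^sub>M (lborel \<Otimes>\<^sub>M lborel)))"
    by (subst nn_integral_distr) auto
  also have "\<dots> = (\<integral>\<^sup>+p. h (case p of (a,b,c) \<Rightarrow> vec3 a b c) \<partial>(lborel \<Otimes>\<^sub>M (lborel::(real\<times>real) measure)))"
    by (simp add: lborel_prod)
  also have "\<dots> = (\<integral>\<^sup>+a. \<integral>\<^sup>+q. h (case q of (b,c) \<Rightarrow> vec3 a b c) \<partial>(lborel::(real\<times>real) measure) \<partial>lborel)"
  proof (subst lborel.nn_integral_fst[symmetric])
    have "(\<lambda>p. h (case p of (a,b,c) \<Rightarrow> vec3 a b c)) \<in> borel_measurable (lborel \<Otimes>\<^sub>M (lborel \<Otimes>\<^sub>M lborel))"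
      by measurable
    then show "(\<lambda>p. h (case p of (a,b,c) \<Rightarrow> vec3 a b c)) \<in> borel_measurable (lborel \<Otimes>\<^sub>M (lborel::(real\<times>real) measure))"
      by (simp add: lborel_prod)
  qed auto
  also have "\<dots> = (\<integral>\<^sup>+a. \<integral>\<^sup>+q. h (case q of (b,c) \<Rightarrow> vec3 a b c) \<partial>(lborel \<Otimes>\<^sub>M lborel) \<partial>lborel)"
    by (simp add: lborel_prod)
  also have "\<dots> = (\<integral>\<^sup>+a. \<integral>\<^sup>+b. \<integral>\<^sup>+c. h (vec3 a b c) \<partial>lborel \<partial>lborel \<partial>lborel)"
    apply (rule nn_integral_cong)
    by (subst lborel.nn_integral_fst[symmetric]) auto
  finally show ?thesis .
qed

lemma SUP_indicator_mono_bound: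
  fixes c :: ennreal and h :: "nat \<Rightarrow> real"
  assumes mono: "incseq h" and unb: "\<And>y. \<exists>n. y \<le> h n"
  shows "(SUP n. c * indicator {a..h n} y) = c * indicator {a..} y"
proof (cases "a \<le> y")
  case True
  obtain n where n: "y \<le> h n" using unb by blast
  have "(SUP n. c * indicator {a..h n} y) = c"
  proof (rule antisym)
    show "(SUP n. c * indicator {a..h n} y) \<le> c"
      by (rule SUP_least) (auto split: split_indicator)
    have "c = c * indicator {a..h n} y" using True n by simp
    also have "\<dots> \<le> (SUP n. c * indicator {a..h n} y)" by (rule SUP_upper) auto
    finally show "c \<le> (SUP n. c * indicator {a..h n} y)" .
  qed
  then show ?thesis using True by simp
next
  case False
  then show ?thesis by simp
qed

lemma nn_integral_substitution_halfline:
  fixes f g g' :: "real \<Rightarrow> real"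
  assumes f[measurable]: "f \<in> borel_measurable borel" and f0: "\<And>y. f y \<ge> 0"
  and derivg: "\<And>x. (g has_real_derivative g' x) (at x)"
  and contg': "continuous_on UNIV g'" and g'0: "\<And>x. x \<ge> a \<Longrightarrow> g' x \<ge> 0"
  and lim: "filterlim g at_top at_top"
  shows "(\<integral>\<^sup>+x. ennreal (f (g x) * g' x) * indicator {a..} x \<partial>lborel) =
         (\<integral>\<^sup>+y. ennreal (f y) * indicator {g a..} y \<partial>lborel)"
proof -
  have contg: "continuous_on UNIV g"
    using derivg by (meson DERIV_continuous continuous_at_imp_continuous_on)
  have [measurable]: "g \<in> borel_measurable borel" "g' \<in> borel_measurable borel"
    using contg contg' by (auto intro: borel_measurable_continuous_onI)
  have gmono: "g x \<le> g y" if "a \<le> x" "x \<le> y" for x y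
    using DERIV_nonneg_imp_nondecreasing[of x y g] that derivg g'0 by (meson order_trans)
  have eq: "(\<integral>\<^sup>+y. ennreal (f y) * indicator {g a..g (a + real n)} y \<partial>lborel) =
        (\<integral>\<^sup>+x. ennreal (f (g x) * g' x) * indicator {a..a + real n} x \<partial>lborel)" for n :: nat
  proof -
    have "(\<integral>\<^sup>+y. f y * indicator {g a..g (a + real n)} y \<partial>lborel) =
        (\<integral>\<^sup>+x. f (g x) * g' x * indicator {a..a + real n} x \<partial>lborel)"
      by (rule nn_integral_substitution)
         (auto intro: derivg continuous_on_subset[OF contg'] g'0 simp: set_borel_measurable_def)
    moreover have "(\<integral>\<^sup>+y. ennreal (f y) * indicator {g a..g (a + real n)} y \<partial>lborel) =
        (\<integral>\<^sup>+y. ennreal (f y * indicator {g a..g (a + real n)} y) \<partial>lborel)"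
      by (rule nn_integral_cong) (simp split: split_indicator)
    moreover have "(\<integral>\<^sup>+x. ennreal (f (g x) * g' x) * indicator {a..a + real n} x \<partial>lborel) =
        (\<integral>\<^sup>+x. ennreal (f (g x) * g' x * indicator {a..a + real n} x) \<partial>lborel)"
      by (rule nn_integral_cong) (simp split: split_indicator)
    ultimately show ?thesis by simp
  qed
  have incx: "incseq (\<lambda>n x. ennreal (f (g x) * g' x) * indicator {a..a + real n} x)"
    by (auto simp: incseq_def le_fun_def intro!: mult_left_mono split: split_indicator)
  have incy: "incseq (\<lambda>n y. ennreal (f y) * indicator {g a..g (a + real n)} y)"
    by (auto simp: incseq_def le_fun_def intro!: mult_left_mono split: split_indicator
        intro: order_trans[OF _ gmono])
  have unbx: "\<exists>n. y \<le> a + real n" for y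
    using real_arch_simple[of "y - a"] by (metis add.commute diff_le_eq)
  have unby: "\<exists>n. y \<le> g (a + real n)" for y
  proof -
    have "\<forall>\<^sub>F x in at_top. y \<le> g x" using lim by (simp add: filterlim_at_top)
    then obtain N where N: "\<And>x. x \<ge> N \<Longrightarrow> y \<le> g x" by (auto simp: eventually_at_top_linorder)
    obtain n where "N - a \<le> real n" using real_arch_simple by blast
    then show ?thesis using N[of "a + real n"] by auto
  qed
  have "(\<integral>\<^sup>+x. ennreal (f (g x) * g' x) * indicator {a..} x \<partial>lborel) =
     (\<integral>\<^sup>+x. (SUP n. ennreal (f (g x) * g' x) * indicator {a..a + real n} x) \<partial>lborel)"
    by (subst SUP_indicator_mono_bound) (auto simp: incseq_def unbx)
  also have "\<dots> = (SUP n. \<integral>\<^sup>+x. ennreal (f (g x) * g' x) * indicator {a..a + real n} x \<partial>lborel)"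
    by (rule nn_integral_monotone_convergence_SUP[OF incx]) auto
  also have "\<dots> = (SUP n. \<integral>\<^sup>+y. ennreal (f y) * indicator {g a..g (a + real n)} y \<partial>lborel)"
    by (simp add: eq)
  also have "\<dots> = (\<integral>\<^sup>+y. (SUP n. ennreal (f y) * indicator {g a..g (a + real n)} y) \<partial>lborel)"
    by (rule nn_integral_monotone_convergence_SUP[OF incy, symmetric]) auto
  also have "\<dots> = (\<integral>\<^sup>+y. ennreal (f y) * indicator {g a..} y \<partial>lborel)"
    by (subst SUP_indicator_mono_bound) (auto simp: incseq_def unby intro!: gmono)
  finally show ?thesis .
qed

lemma pred_greaterThan_var[measurable (raw)]:
  fixes f g :: "'a \<Rightarrow> real"
  assumes [measurable]: "f \<in> borel_measurable M" "g \<in> borel_measurable M"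
  shows "Measurable.pred M (\<lambda>x. f x \<in> {g x<..})"
  by simp

lemma norm_vec3_sq: "(norm (vec3 a b c))^2 = a^2 + b^2 + c^2"
  unfolding power2_norm_eq_inner by (simp add: inner_vec_def sum_3 power2_eq_square)

lemma norm_vector3_sq: "(norm (vector [a, b, c] :: real^3))^2 = a^2 + b^2 + c^2"
  unfolding power2_norm_eq_inner by (simp add: inner_vec_def sum_3 power2_eq_square)

lemma angmom_radpt_vec3: "angmom (radpt s) (vec3 a b c) = s^2 * (b^2 + c^2)"
  unfolding angmom_def cross3_def radpt_def norm_vector3_sq
  by (simp add: power2_eq_square algebra_simps)

lemma filterlim_at_top_ge_id:
  fixes g :: "real \<Rightarrow> real"
  assumes "\<And>x. x \<ge> N \<Longrightarrow> x \<le> g x"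
  shows "filterlim g at_top at_top"
  by (rule filterlim_at_top_mono[OF filterlim_ident]) (use assms in \<open>auto simp: eventually_at_top_linorder\<close>)

lemma csub:
  fixes H :: "real \<Rightarrow> real"
  assumes [measurable]: "H \<in> borel_measurable borel" and H0: "\<And>L. H L \<ge> 0" and s: "s > 0"
  shows "(\<integral>\<^sup>+L. ennreal (H L / (2 * s * sqrt \<bar>L\<bar>)) * indicator {s^2 * b^2<..} L \<partial>lborel)
       \<le> (\<integral>\<^sup>+c. ennreal (H (s^2 * (b^2 + c^2))) * indicator {0<..} c \<partial>lborel)"
proof -
  let ?F = "\<lambda>L. H L / (2 * s * sqrt \<bar>L\<bar>)"
  let ?g = "\<lambda>c. s^2 * (b^2 + c^2)"
  let ?g' = "\<lambda>c. 2 * s^2 * c"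
  have "(\<integral>\<^sup>+L. ennreal (?F L) * indicator {s^2 * b^2<..} L \<partial>lborel)
      \<le> (\<integral>\<^sup>+L. ennreal (?F L) * indicator {?g 0..} L \<partial>lborel)"
    by (intro nn_integral_mono) (auto split: split_indicator)
  also have "\<dots> = (\<integral>\<^sup>+c. ennreal (?F (?g c) * ?g' c) * indicator {0..} c \<partial>lborel)"
  proof (rule nn_integral_substitution_halfline[symmetric])
    show "?F \<in> borel_measurable borel" by measurable
    show "?F L \<ge> 0" for L using H0[of L] s by (intro divide_nonneg_nonneg) auto
    show "(?g has_real_derivative ?g' x) (at x)" for x
      by (auto intro!: derivative_eq_intros simp: algebra_simps)
    show "continuous_on UNIV ?g'" by (intro continuous_intros)
    show "0 \<le> x \<Longrightarrow> ?g' x \<ge> 0" for x by simp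
    show "filterlim ?g at_top at_top"
    proof (rule filterlim_at_top_ge_id[where N="max 1 (1 / s^2)"])
      fix x :: real assume x: "max 1 (1 / s^2) \<le> x"
      then have "1 \<le> s^2 * x" using s by (simp add: field_simps)
      then have "x \<le> (s^2 * x) * x" using x by (simp add: mult_le_cancel_right1)
      also have "\<dots> \<le> s^2 * (b^2 + x^2)"
      proof -
        have "s^2 * x * x = s^2 * x^2" by (simp add: power2_eq_square)
        moreover have "0 \<le> s^2 * b^2" by simp
        moreover have "s^2 * (b^2 + x^2) = s^2 * b^2 + s^2 * x^2" by (simp add: distrib_left)
        ultimately show ?thesis by linarith
      qed
      finally show "x \<le> s^2 * (b^2 + x^2)" .
    qed
  qed
  also have "\<dots> \<le> (\<integral>\<^sup>+c. ennreal (H (s^2 * (b^2 + c^2))) * indicator {0<..} c \<partial>lborel)"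
  proof (intro nn_integral_mono)
    fix c :: real
    show "ennreal (?F (?g c) * ?g' c) * indicator {0..} c \<le> ennreal (H (s^2 * (b^2 + c^2))) * indicator {0<..} c"
    proof (cases "c > 0")
      case True
      have sq: "sqrt (s^2 * (b^2 + c^2)) = s * sqrt (b^2 + c^2)"
        using s by (simp add: real_sqrt_mult)
      have cle: "c \<le> sqrt (b^2 + c^2)"
        using True by (simp add: real_le_rsqrt)
      have pos: "sqrt (b^2 + c^2) > 0" using True by (intro real_sqrt_gt_zero add_nonneg_pos) auto
      have ab: "\<bar>?g c\<bar> = ?g c" by simp
      have "?F (?g c) * ?g' c = H (?g c) * (2 * s ^ 2 * c) / (2 * s * (s * sqrt (b ^ 2 + c ^ 2)))"
        by (simp only: ab sq) simp
      also have "\<dots> = H (?g c) * (c / sqrt (b^2 + c^2))"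
        using s pos by (simp add: power2_eq_square)
      also have "\<dots> \<le> H (?g c)"
        using H0[of "?g c"] cle pos by (intro mult_left_le) (auto simp: divide_le_eq)
      finally show ?thesis using True by (simp add: ennreal_leI)
    next
      case False
      then show ?thesis by (cases "c = 0") auto
    qed
  qed
  finally show ?thesis .
qed

lemma emeasure_sq_less:
  assumes s: "s > 0"
  shows "emeasure lborel {b::real. s^2 * b^2 < L} = ennreal (if L > 0 then 2 * sqrt L / s else 0)"
proof (cases "L > 0")
  case True
  have iff: "s^2 * b^2 < L \<longleftrightarrow> - (sqrt L / s) < b \<and> b < sqrt L / s" for b
  proof -
    have e: "sqrt ((s * \<bar>b\<bar>)^2) = s * \<bar>b\<bar>"
      using s by simp
    have "s^2 * b^2 < L \<longleftrightarrow> sqrt ((s * \<bar>b\<bar>)^2) < sqrt L"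
      by (simp only: real_sqrt_less_iff power_mult_distrib power2_abs)
    also have "\<dots> \<longleftrightarrow> s * \<bar>b\<bar> < sqrt L"
      by (simp only: e)
    also have "\<dots> \<longleftrightarrow> \<bar>b\<bar> < sqrt L / s"
      using s by (simp add: pos_less_divide_eq mult.commute)
    finally show ?thesis by arith
  qed
  have "{b::real. s^2 * b^2 < L} = {- (sqrt L / s)<..<sqrt L / s}"
    by (rule set_eqI) (simp add: iff)
  moreover have "sqrt L / s - - (sqrt L / s) = 2 * sqrt L / s" by simp
  moreover have "- (sqrt L / s) \<le> sqrt L / s" using s True by simp
  ultimately show ?thesis using True by (simp del: minus_divide_left)
next
  case False
  have "\<not> s^2 * b^2 < L" for b :: real
  proof -
    have "0 \<le> s^2 * b^2" by simp
    then show ?thesis using False by linarith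
  qed
  then have "{b::real. s^2 * b^2 < L} = {}" by auto
  then show ?thesis using False by simp
qed

lemma meas_comp3:
  fixes G :: "real \<Rightarrow> real \<Rightarrow> real \<Rightarrow> real"
  assumes Gm: "(\<lambda>p. G (fst p) (fst (snd p)) (snd (snd p))) \<in> borel_measurable borel"
    and [measurable]: "f1 \<in> borel_measurable M" "f2 \<in> borel_measurable M" "f3 \<in> borel_measurable M"
  shows "(\<lambda>x. G (f1 x) (f2 x) (f3 x)) \<in> borel_measurable M"
proof -
  have "(\<lambda>x. (f1 x, f2 x, f3 x)) \<in> borel_measurable M" by measurable
  from measurable_compose[OF this Gm] show ?thesis by simp
qed

lemma meas_comp2:
  fixes B :: "real \<Rightarrow> real \<Rightarrow> real"
  assumes Bm: "(\<lambda>p. B (fst p) (snd p)) \<in> borel_measurable borel"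
    and [measurable]: "f1 \<in> borel_measurable M" "f2 \<in> borel_measurable M"
  shows "(\<lambda>x. B (f1 x) (f2 x)) \<in> borel_measurable M"
proof -
  have "(\<lambda>x. (f1 x, f2 x)) \<in> borel_measurable M" by measurable
  from measurable_compose[OF this Bm] show ?thesis by simp
qed

lemma gen_lower:
  fixes Phi :: "real \<times> real \<Rightarrow> real" and G :: "real \<Rightarrow> real \<Rightarrow> real \<Rightarrow> real"
    and B :: "real \<Rightarrow> real \<Rightarrow> real" and w :: "real \<Rightarrow> real"
  assumes Phim[measurable]: "Phi \<in> borel_measurable borel" and Phi0: "\<And>z. Phi z \<ge> 0"
    and Gm: "(\<lambda>p. G (fst p) (fst (snd p)) (snd (snd p))) \<in> borel_measurable borel"
    and G0: "\<And>s t L. G s t L \<ge> 0"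
    and Bm: "(\<lambda>p. B (fst p) (snd p)) \<in> borel_measurable borel"
    and wm[measurable]: "w \<in> borel_measurable borel" and w0: "\<And>E. w E \<ge> 0"
    and asub: "\<And>s L. 1 \<le> s \<Longrightarrow> 0 < L \<Longrightarrow>
      (\<integral>\<^sup>+E. ennreal (Phi (E, L) * w E) * indicator {B s L<..} E \<partial>lborel)
        \<le> (\<integral>\<^sup>+a. ennreal (G s (a^2 + L / s^2) L) * indicator {0<..} a \<partial>lborel)"
  shows "(\<integral>\<^sup>+z. ennreal (Phi z) * (\<integral>\<^sup>+s. ennreal (w (fst z)) * indicator {0<..} (snd z) *
              indicator {1..} s * indicator {B s (snd z)<..} (fst z) \<partial>lborel) \<partial>lborel)
     \<le> (\<integral>\<^sup>+s. ennreal (s^2) * indicator {1..} s *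
              (\<integral>\<^sup>+v. ennreal (G s ((norm v)^2) (angmom (radpt s) v)) \<partial>lborel) \<partial>lborel)"
proof -
  note mG[measurable (raw)] = meas_comp3[OF Gm]
  note mB[measurable (raw)] = meas_comp2[OF Bm]
  define Q where "Q s = (\<integral>\<^sup>+L. indicator {0<..} L *
      (\<integral>\<^sup>+E. ennreal (Phi (E, L) * w E) * indicator {B s L<..} E \<partial>lborel) \<partial>lborel)" for s
  have pw: "indicator {1..} s * Q s \<le> ennreal (s^2) * indicator {1..} s *
              (\<integral>\<^sup>+v. ennreal (G s ((norm v)^2) (angmom (radpt s) v)) \<partial>lborel)" for s
  proof (cases "1 \<le> s")
    case False then show ?thesis by simp
  next
    case True
    then have s: "s > 0" by simp
    define H where "H a L = G s (a^2 + L / s^2) L" for a L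
    have Hm[measurable (raw)]: "(\<lambda>x. H (f x) (g x)) \<in> borel_measurable M"
      if [measurable]: "f \<in> borel_measurable M" "g \<in> borel_measurable M" for f g and M :: "'z measure"
      unfolding H_def by measurable
    have H0: "H a L \<ge> 0" for a L by (simp add: H_def G0)
    have "Q s \<le> (\<integral>\<^sup>+L. indicator {0<..} L * (\<integral>\<^sup>+a. ennreal (H a L) * indicator {0<..} a \<partial>lborel) \<partial>lborel)"
      unfolding Q_def H_def
      by (intro nn_integral_mono) (auto intro: asub[OF True] split: split_indicator)
    also have "\<dots> = (\<integral>\<^sup>+L. (\<integral>\<^sup>+a. indicator {0<..} L * (ennreal (H a L) * indicator {0<..} a) \<partial>lborel) \<partial>lborel)"
      by (intro nn_integral_cong nn_integral_cmult[symmetric]) measurable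
    also have "\<dots> = (\<integral>\<^sup>+a. (\<integral>\<^sup>+L. indicator {0<..} L * (ennreal (H a L) * indicator {0<..} a) \<partial>lborel) \<partial>lborel)"
      by (rule lborel_pair.Fubini') measurable
    also have "\<dots> = (\<integral>\<^sup>+a. ennreal (s^2) * (indicator {0<..} a * (\<integral>\<^sup>+L. ennreal (H a L / s^2) * indicator {0<..} L \<partial>lborel)) \<partial>lborel)"
    proof (intro nn_integral_cong)
      fix a :: real
      have "(\<integral>\<^sup>+L. indicator {0<..} L * (ennreal (H a L) * indicator {0<..} a) \<partial>lborel) =
          (\<integral>\<^sup>+L. (ennreal (s^2) * indicator {0<..} a) * (ennreal (H a L / s^2) * indicator {0<..} L) \<partial>lborel)"
        using s H0[of a] by (intro nn_integral_cong) (auto simp: ennreal_mult'[symmetric] split: split_indicator)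
      also have "\<dots> = (ennreal (s^2) * indicator {0<..} a) * (\<integral>\<^sup>+L. ennreal (H a L / s^2) * indicator {0<..} L \<partial>lborel)"
        by (rule nn_integral_cmult) measurable
      finally show "(\<integral>\<^sup>+L. indicator {0<..} L * (ennreal (H a L) * indicator {0<..} a) \<partial>lborel) =
          ennreal (s^2) * (indicator {0<..} a * (\<integral>\<^sup>+L. ennreal (H a L / s^2) * indicator {0<..} L \<partial>lborel))"
        by (simp add: mult.assoc)
    qed
    also have "\<dots> = ennreal (s^2) * (\<integral>\<^sup>+a. indicator {0<..} a * (\<integral>\<^sup>+L. ennreal (H a L / s^2) * indicator {0<..} L \<partial>lborel) \<partial>lborel)"
      by (rule nn_integral_cmult) measurable
    also have "(\<integral>\<^sup>+a. indicator {0<..} a * (\<integral>\<^sup>+L. ennreal (H a L / s^2) * indicator {0<..} L \<partial>lborel) \<partial>lborel)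
        \<le> (\<integral>\<^sup>+v. ennreal (G s ((norm v)^2) (angmom (radpt s) v)) \<partial>lborel)"
    proof -
      have eqL: "(\<integral>\<^sup>+L. ennreal (H a L / s^2) * indicator {0<..} L \<partial>lborel) =
          (\<integral>\<^sup>+L. (\<integral>\<^sup>+b. ennreal (H a L / (2 * s * sqrt \<bar>L\<bar>)) * indicator {s^2 * b^2<..} L \<partial>lborel) \<partial>lborel)" for a
      proof (intro nn_integral_cong)
        fix L :: real
        have "(\<integral>\<^sup>+b. ennreal (H a L / (2 * s * sqrt \<bar>L\<bar>)) * indicator {s^2 * b^2<..} L \<partial>lborel)
            = (\<integral>\<^sup>+b. ennreal (H a L / (2 * s * sqrt \<bar>L\<bar>)) * indicator {b. s^2 * b^2 < L} b \<partial>lborel)"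
          by (intro nn_integral_cong) (simp split: split_indicator)
        also have "\<dots> = ennreal (H a L / (2 * s * sqrt \<bar>L\<bar>)) * emeasure lborel {b. s^2 * b^2 < L}"
          by (rule nn_integral_cmult_indicator) measurable
        also have "\<dots> = ennreal (H a L / s^2) * indicator {0<..} L"
        proof (cases "L > 0")
          case True
          have "H a L / (2 * s * sqrt L) * (2 * sqrt L / s) = H a L / s^2"
            using True s by (simp add: field_simps power2_eq_square)
          then show ?thesis using True s H0[of a L]
            by (simp add: emeasure_sq_less ennreal_mult'[symmetric])
        next
          case False then show ?thesis using s by (simp add: emeasure_sq_less)
        qed
        finally show "ennreal (H a L / s^2) * indicator {0<..} L =
          (\<integral>\<^sup>+b. ennreal (H a L / (2 * s * sqrt \<bar>L\<bar>)) * indicator {s^2 * b^2<..} L \<partial>lborel)" by simp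
      qed
      have "(\<integral>\<^sup>+a. indicator {0<..} a * (\<integral>\<^sup>+L. ennreal (H a L / s^2) * indicator {0<..} L \<partial>lborel) \<partial>lborel)
         = (\<integral>\<^sup>+a. indicator {0<..} a * (\<integral>\<^sup>+b. (\<integral>\<^sup>+L. ennreal (H a L / (2 * s * sqrt \<bar>L\<bar>)) * indicator {s^2 * b^2<..} L \<partial>lborel) \<partial>lborel) \<partial>lborel)"
        unfolding eqL by (intro nn_integral_cong arg_cong2[where f="(*)"] refl lborel_pair.Fubini') measurable
      also have "\<dots> \<le> (\<integral>\<^sup>+a. indicator {0<..} a * (\<integral>\<^sup>+b. (\<integral>\<^sup>+c. ennreal (H a (s^2 * (b^2 + c^2))) * indicator {0<..} c \<partial>lborel) \<partial>lborel) \<partial>lborel)"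
        by (intro nn_integral_mono mult_left_mono csub) (auto simp: H0 s)
      also have "\<dots> \<le> (\<integral>\<^sup>+a. (\<integral>\<^sup>+b. (\<integral>\<^sup>+c. ennreal (H a (s^2 * (b^2 + c^2))) \<partial>lborel) \<partial>lborel) \<partial>lborel)"
      proof (intro nn_integral_mono)
        fix a :: real
        have "(\<integral>\<^sup>+b. (\<integral>\<^sup>+c. ennreal (H a (s^2 * (b^2 + c^2))) * indicator {0<..} c \<partial>lborel) \<partial>lborel)
           \<le> (\<integral>\<^sup>+b. (\<integral>\<^sup>+c. ennreal (H a (s^2 * (b^2 + c^2))) \<partial>lborel) \<partial>lborel)"
          by (intro nn_integral_mono) (simp split: split_indicator)
        then show "indicator {0<..} a * (\<integral>\<^sup>+b. (\<integral>\<^sup>+c. ennreal (H a (s^2 * (b^2 + c^2))) * indicator {0<..} c \<partial>lborel) \<partial>lborel)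
           \<le> (\<integral>\<^sup>+b. (\<integral>\<^sup>+c. ennreal (H a (s^2 * (b^2 + c^2))) \<partial>lborel) \<partial>lborel)"
          by (simp split: split_indicator)
      qed
      also have "\<dots> = (\<integral>\<^sup>+v. ennreal (G s ((norm v)^2) (angmom (radpt s) v)) \<partial>lborel)"
      proof (subst nn_integral_lborel3)
        show "(\<lambda>v. ennreal (G s ((norm v)^2) (angmom (radpt s) v))) \<in> borel_measurable borel"
          by measurable
        show "(\<integral>\<^sup>+a. (\<integral>\<^sup>+b. (\<integral>\<^sup>+c. ennreal (H a (s^2 * (b^2 + c^2))) \<partial>lborel) \<partial>lborel) \<partial>lborel) =
          (\<integral>\<^sup>+a. (\<integral>\<^sup>+b. (\<integral>\<^sup>+c. ennreal (G s ((norm (vec3 a b c))^2) (angmom (radpt s) (vec3 a b c))) \<partial>lborel) \<partial>lborel) \<partial>lborel)"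
          using s by (simp add: H_def norm_vec3_sq angmom_radpt_vec3 add.assoc)
      qed
      finally show ?thesis .
    qed
    finally show ?thesis using True by (simp add: mult_left_mono mult.assoc)
  qed
  define K where "K s L E = ennreal (Phi (E, L)) * (ennreal (w E) * indicator {0<..} L *
              indicator {1..} s * indicator {B s L<..} E)" for s L E
  have Km[measurable]: "(\<lambda>x. K (f x) (g x) (h x)) \<in> borel_measurable M"
    if [measurable]: "f \<in> borel_measurable M" "g \<in> borel_measurable M" "h \<in> borel_measurable M"
    for f g h and M :: "'z measure"
    unfolding K_def by measurable
  have "(\<integral>\<^sup>+z. ennreal (Phi z) * (\<integral>\<^sup>+s. ennreal (w (fst z)) * indicator {0<..} (snd z) *
              indicator {1..} s * indicator {B s (snd z)<..} (fst z) \<partial>lborel) \<partial>lborel)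
      = (\<integral>\<^sup>+z. ennreal (Phi z) * (\<integral>\<^sup>+s. ennreal (w (fst z)) * indicator {0<..} (snd z) *
              indicator {1..} s * indicator {B s (snd z)<..} (fst z) \<partial>lborel) \<partial>(lborel \<Otimes>\<^sub>M lborel))"
    by (simp only: lborel_prod)
  also have "\<dots> = (\<integral>\<^sup>+L. (\<integral>\<^sup>+E. ennreal (Phi (E, L)) * (\<integral>\<^sup>+s. ennreal (w E) * indicator {0<..} L *
              indicator {1..} s * indicator {B s L<..} E \<partial>lborel) \<partial>lborel) \<partial>lborel)"
  proof (subst lborel_pair.nn_integral_snd[symmetric])
    show "(\<lambda>z. ennreal (Phi z) * (\<integral>\<^sup>+s. ennreal (w (fst z)) * indicator {0<..} (snd z) *
              indicator {1..} s * indicator {B s (snd z)<..} (fst z) \<partial>lborel)) \<in> borel_measurable (lborel \<Otimes>\<^sub>M lborel)"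
    proof -
      have "(\<lambda>(z, s). ennreal (w (fst z)) * indicator {0<..} (snd z) *
              indicator {1..} s * indicator {B s (snd z)<..} (fst z)) \<in> borel_measurable ((lborel \<Otimes>\<^sub>M lborel) \<Otimes>\<^sub>M lborel)"
        by measurable
      from lborel.borel_measurable_nn_integral[OF this]
      have "(\<lambda>z. (\<integral>\<^sup>+s. ennreal (w (fst z)) * indicator {0<..} (snd z) *
              indicator {1..} s * indicator {B s (snd z)<..} (fst z) \<partial>lborel)) \<in> borel_measurable (lborel \<Otimes>\<^sub>M lborel)" 
        by simp
      moreover have "(\<lambda>z. ennreal (Phi (fst z, snd z))) \<in> borel_measurable (lborel \<Otimes>\<^sub>M lborel)"
        by measurable
      ultimately show ?thesis by simp
    qed
  qed simp
  also have "\<dots> = (\<integral>\<^sup>+L. (\<integral>\<^sup>+E. (\<integral>\<^sup>+s. K s L E \<partial>lborel) \<partial>lborel) \<partial>lborel)"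
    unfolding K_def by (intro nn_integral_cong nn_integral_cmult[symmetric]) measurable
  also have "\<dots> = (\<integral>\<^sup>+L. (\<integral>\<^sup>+s. (\<integral>\<^sup>+E. K s L E \<partial>lborel) \<partial>lborel) \<partial>lborel)"
    by (intro nn_integral_cong lborel_pair.Fubini') measurable
  also have "\<dots> = (\<integral>\<^sup>+s. (\<integral>\<^sup>+L. (\<integral>\<^sup>+E. K s L E \<partial>lborel) \<partial>lborel) \<partial>lborel)"
    by (rule lborel_pair.Fubini') measurable
  also have "\<dots> = (\<integral>\<^sup>+s. indicator {1..} s * Q s \<partial>lborel)"
  proof (intro nn_integral_cong)
    fix s :: real
    have "(\<integral>\<^sup>+L. (\<integral>\<^sup>+E. K s L E \<partial>lborel) \<partial>lborel) =
      (\<integral>\<^sup>+L. (indicator {1..} s * indicator {0<..} L) * (\<integral>\<^sup>+E. ennreal (Phi (E, L) * w E) * indicator {B s L<..} E \<partial>lborel) \<partial>lborel)"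
    proof (intro nn_integral_cong)
      fix L :: real
      have "(\<integral>\<^sup>+E. K s L E \<partial>lborel) = (\<integral>\<^sup>+E. (indicator {1..} s * indicator {0<..} L) * (ennreal (Phi (E, L) * w E) * indicator {B s L<..} E) \<partial>lborel)"
        unfolding K_def using Phi0 w0 by (intro nn_integral_cong) (simp add: ennreal_mult' mult_ac)
      also have "\<dots> = (indicator {1..} s * indicator {0<..} L) * (\<integral>\<^sup>+E. ennreal (Phi (E, L) * w E) * indicator {B s L<..} E \<partial>lborel)"
        by (rule nn_integral_cmult) measurable
      finally show "(\<integral>\<^sup>+E. K s L E \<partial>lborel) = (indicator {1..} s * indicator {0<..} L) * (\<integral>\<^sup>+E. ennreal (Phi (E, L) * w E) * indicator {B s L<..} E \<partial>lborel)" .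
    qed
    also have "\<dots> = (\<integral>\<^sup>+L. indicator {1..} s * (indicator {0<..} L * (\<integral>\<^sup>+E. ennreal (Phi (E, L) * w E) * indicator {B s L<..} E \<partial>lborel)) \<partial>lborel)"
      by (simp add: mult.assoc)
    also have "\<dots> = indicator {1..} s * Q s"
      unfolding Q_def by (rule nn_integral_cmult) measurable
    finally show "(\<integral>\<^sup>+L. (\<integral>\<^sup>+E. K s L E \<partial>lborel) \<partial>lborel) = indicator {1..} s * Q s" .
  qed
  also have "\<dots> \<le> (\<integral>\<^sup>+s. ennreal (s^2) * indicator {1..} s *
              (\<integral>\<^sup>+v. ennreal (G s ((norm v)^2) (angmom (radpt s) v)) \<partial>lborel) \<partial>lborel)"
    by (intro nn_integral_mono pw)
  finally show ?thesis .
qed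

lemma radpt_measurable[measurable]:
  assumes [measurable]: "f \<in> borel_measurable M"
  shows "(\<lambda>x. radpt (f x)) \<in> borel_measurable M"
  unfolding radpt_axis by measurable

lemma mass_polar:
  fixes G :: "real \<Rightarrow> real \<Rightarrow> real \<Rightarrow> real"
  assumes Gm: "(\<lambda>p. G (fst p) (fst (snd p)) (snd (snd p))) \<in> borel_measurable borel"
  shows "(\<integral>\<^sup>+x. (\<integral>\<^sup>+v. ennreal (G (norm x) ((norm v)^2) (angmom x v)) \<partial>lborel) \<partial>lborel)
    = ennreal (4 * pi) * (\<integral>\<^sup>+s. ennreal (s^2) * indicator {0..} s *
         (\<integral>\<^sup>+v. ennreal (G s ((norm v)^2) (angmom (radpt s) v)) \<partial>lborel) \<partial>lborel)"
proof -
  note mG[measurable (raw)] = meas_comp3[OF Gm]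
  define g where "g s = (\<integral>\<^sup>+v. ennreal (G s ((norm v)^2) (angmom (radpt s) v)) \<partial>lborel)" for s
  have gm[measurable]: "g \<in> borel_measurable borel"
  proof -
    have "(\<lambda>(s, v). ennreal (G s ((norm v)^2) (angmom (radpt s) v))) \<in> borel_measurable (lborel \<Otimes>\<^sub>M lborel)"
      by measurable
    from lborel.borel_measurable_nn_integral[OF this] show ?thesis
      unfolding g_def by simp
  qed
  have "(\<integral>\<^sup>+x. (\<integral>\<^sup>+v. ennreal (G (norm x) ((norm v)^2) (angmom x v)) \<partial>lborel) \<partial>lborel)
      = (\<integral>\<^sup>+x. g (norm (x::real^3)) \<partial>lborel)"
  proof (intro nn_integral_cong)
    fix x :: "real^3"
    have "(\<lambda>(t, q). ennreal (G (norm x) (t^2) q)) \<in> borel_measurable borel"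
      by (simp only: split_beta' borel_prod[symmetric]) measurable
    from nn_integral_radial[OF this, of x]
    show "(\<integral>\<^sup>+v. ennreal (G (norm x) ((norm v)^2) (angmom x v)) \<partial>lborel) = g (norm x)"
      unfolding g_def by simp
  qed
  also have "\<dots> = (\<integral>\<^sup>+s. ennreal (4 * pi * s ^ 2) * indicator {0..} s * g s \<partial>lborel)"
    by (rule nn_integral_polar3) measurable
  also have "\<dots> = (\<integral>\<^sup>+s. ennreal (4 * pi) * (ennreal (s^2) * indicator {0..} s * g s) \<partial>lborel)"
    by (intro nn_integral_cong) (simp add: ennreal_mult mult.assoc)
  also have "\<dots> = ennreal (4 * pi) * (\<integral>\<^sup>+s. ennreal (s^2) * indicator {0..} s * g s \<partial>lborel)"
    by (rule nn_integral_cmult) measurable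
  finally show ?thesis unfolding g_def .
qed

lemma emeasure_lborel_Ici_infinite: "emeasure lborel {S::real..} = \<infinity>"
proof (rule ccontr)
  assume "emeasure lborel {S::real..} \<noteq> \<infinity>"
  then obtain r where r: "emeasure lborel {S::real..} = ennreal r" "r \<ge> 0"
    by (cases "emeasure lborel {S::real..}") auto
  obtain n :: nat where n: "r + 1 \<le> real n" using real_arch_simple by blast
  have "ennreal (real n) = emeasure lborel {S..S + real n}" by simp
  also have "\<dots> \<le> emeasure lborel {S::real..}" by (intro emeasure_mono) auto
  finally have "real n \<le> r" using r by simp
  then show False using n by simp
qed

lemma nn_integral_tail_infinite:
  fixes f :: "real \<Rightarrow> ennreal"
  assumes c: "c > 0" and ge: "\<And>s. s \<ge> S \<Longrightarrow> c \<le> f s"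
  shows "(\<integral>\<^sup>+s. f s \<partial>lborel) = \<infinity>"
proof -
  have "c * emeasure lborel {S..} = (\<integral>\<^sup>+s. c * indicator {S..} s \<partial>lborel)"
    by (rule nn_integral_cmult_indicator[symmetric]) simp
  also have "\<dots> \<le> (\<integral>\<^sup>+s. f s \<partial>lborel)"
    by (intro nn_integral_mono) (auto intro: ge split: split_indicator)
  finally show ?thesis using c by (simp add: emeasure_lborel_Ici_infinite ennreal_mult_top top_unique split: if_splits)
qed

lemma mono_bdd_lim:
  fixes f :: "real \<Rightarrow> real"
  assumes mono: "\<And>x y. a \<le> x \<Longrightarrow> x \<le> y \<Longrightarrow> f x \<le> f y"
    and bdd: "\<And>x. a \<le> x \<Longrightarrow> f x \<le> C"
  shows "\<exists>l. (f \<longlongrightarrow> l) at_top \<and> (\<forall>x\<ge>a. f x \<le> l)"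
proof -
  define l where "l = (SUP x\<in>{a..}. f x)"
  have bd: "bdd_above (f ` {a..})" using bdd by (intro bdd_aboveI[of _ C]) auto
  have le: "f x \<le> l" if "a \<le> x" for x
    unfolding l_def using bd that by (intro cSUP_upper) auto
  have "(f \<longlongrightarrow> l) at_top"
  proof (rule order_tendstoI)
    fix y assume "y < l"
    then obtain x0 where x0: "x0 \<in> {a..}" "y < f x0"
      unfolding l_def using bd by (subst (asm) less_cSUP_iff) auto
    then show "\<forall>\<^sub>F x in at_top. y < f x"
      unfolding eventually_at_top_linorder
      by (intro exI[of _ x0]) (auto intro: less_le_trans mono)
  next
    fix y assume "l < y"
    then show "\<forall>\<^sub>F x in at_top. f x < y"
      unfolding eventually_at_top_linorder
      by (intro exI[of _ a]) (auto intro: le_less_trans le)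
  qed
  then show ?thesis using le by blast
qed

lemma eventually_small_quot:
  fixes L \<epsilon> :: real
  assumes "\<epsilon> > 0" "L \<ge> 0"
  shows "\<exists>S0\<ge>1. \<forall>s\<ge>S0. L / s^2 < \<epsilon>"
proof (intro exI[of _ "L / \<epsilon> + 1"] conjI allI impI)
  show "1 \<le> L / \<epsilon> + 1" using assms by simp
  fix s assume s: "L / \<epsilon> + 1 \<le> s"
  then have s1: "s \<ge> 1" using assms by (smt (verit) divide_nonneg_pos)
  have "L / s^2 \<le> L / s"
    using s1 assms by (intro divide_left_mono) (auto simp: power2_eq_square)
  also have "L / s < \<epsilon>"
    using s s1 assms by (simp add: divide_less_eq field_simps)
  finally show "L / s^2 < \<epsilon>" .
qed

lemma gen_conclude:
  fixes Phi :: "real \<times> real \<Rightarrow> real" and G :: "real \<Rightarrow> real \<Rightarrow> real \<Rightarrow> real"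
    and B :: "real \<Rightarrow> real \<Rightarrow> real" and w :: "real \<Rightarrow> real" and P :: "real \<Rightarrow> bool"
  assumes Phim[measurable]: "Phi \<in> borel_measurable borel" and Phi0: "\<And>z. Phi z \<ge> 0"
    and Gm: "(\<lambda>p. G (fst p) (fst (snd p)) (snd (snd p))) \<in> borel_measurable borel"
    and G0: "\<And>s t L. G s t L \<ge> 0"
    and Bm: "(\<lambda>p. B (fst p) (snd p)) \<in> borel_measurable borel"
    and wm[measurable]: "w \<in> borel_measurable borel" and w0: "\<And>E. w E \<ge> 0"
    and asub: "\<And>s L. 1 \<le> s \<Longrightarrow> 0 < L \<Longrightarrow>
      (\<integral>\<^sup>+E. ennreal (Phi (E, L) * w E) * indicator {B s L<..} E \<partial>lborel)
        \<le> (\<integral>\<^sup>+a. ennreal (G s (a^2 + L / s^2) L) * indicator {0<..} a \<partial>lborel)"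
    and fin: "(\<integral>\<^sup>+s. ennreal (s^2) * indicator {1..} s *
              (\<integral>\<^sup>+v. ennreal (G s ((norm v)^2) (angmom (radpt s) v)) \<partial>lborel) \<partial>lborel) < \<infinity>"
    and region: "\<And>E L. P E \<Longrightarrow> 0 < L \<Longrightarrow> w E > 0 \<and> (\<exists>S0. \<forall>s\<ge>S0. B s L < E)"
  shows "AE z in lborel. P (fst z) \<and> snd z > 0 \<longrightarrow> Phi z = 0"
proof -
  note mB[measurable (raw)] = meas_comp2[OF Bm]
  define W where "W z = (\<integral>\<^sup>+s. ennreal (w (fst z)) * indicator {0<..} (snd z) *
              indicator {1..} s * indicator {B s (snd z)<..} (fst z) \<partial>lborel)" for z :: "real \<times> real"
  have "(\<integral>\<^sup>+z. ennreal (Phi z) * W z \<partial>lborel) < \<infinity>"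
    unfolding W_def using gen_lower[OF Phim Phi0 Gm G0 Bm wm w0 asub] fin
    by (rule le_less_trans)
  moreover have meas: "(\<lambda>z. ennreal (Phi z) * W z) \<in> borel_measurable (lborel :: (real \<times> real) measure)"
  proof -
    have "(\<lambda>(z, s). ennreal (w (fst z)) * indicator {0<..} (snd z) *
            indicator {1..} s * indicator {B s (snd z)<..} (fst z)) \<in> borel_measurable ((lborel \<Otimes>\<^sub>M lborel) \<Otimes>\<^sub>M lborel)"
      by measurable
    from lborel.borel_measurable_nn_integral[OF this]
    have "W \<in> borel_measurable (lborel \<Otimes>\<^sub>M lborel)" unfolding W_def by simp
    moreover have "(\<lambda>z. ennreal (Phi (fst z, snd z))) \<in> borel_measurable (lborel \<Otimes>\<^sub>M lborel)"
      by measurable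
    ultimately have "(\<lambda>z. ennreal (Phi z) * W z) \<in> borel_measurable (lborel \<Otimes>\<^sub>M lborel)"
      by simp
    then show ?thesis by (simp add: lborel_prod)
  qed
  ultimately have "AE z in lborel. ennreal (Phi z) * W z \<noteq> \<infinity>"
    by (intro nn_integral_PInf_AE) auto
  then show ?thesis
  proof (rule eventually_mono, intro impI)
    fix z :: "real \<times> real"
    assume ne: "ennreal (Phi z) * W z \<noteq> \<infinity>" and Pz: "P (fst z) \<and> snd z > 0"
    obtain wpos: "w (fst z) > 0" and S0: "\<exists>S0. \<forall>s\<ge>S0. B s (snd z) < fst z"
      using region Pz by blast
    then obtain S0 where S0: "\<And>s. s \<ge> S0 \<Longrightarrow> B s (snd z) < fst z" by blast
    have "W z = \<infinity>"
      unfolding W_def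
    proof (rule nn_integral_tail_infinite[where c="ennreal (w (fst z))" and S="max S0 1"])
      show "0 < ennreal (w (fst z))" using wpos by simp
      fix s assume "max S0 1 \<le> s"
      then show "ennreal (w (fst z)) \<le> ennreal (w (fst z)) * indicator {0<..} (snd z) *
              indicator {1..} s * indicator {B s (snd z)<..} (fst z)"
        using S0[of s] Pz by simp
    qed
    then have "ennreal (Phi z) = 0" using ne by (auto simp: ennreal_mult_eq_top_iff)
    then show "Phi z = 0" using Phi0[of z] by simp
  qed
qed

lemma measurable_extend_pos:
  fixes U :: "real \<Rightarrow> real"
  assumes "continuous_on {0<..} U"
  shows "(\<lambda>s. if s > 0 then U s else U 1) \<in> borel_measurable borel"
proof -
  have m1: "(\<lambda>s. indicator {0<..} s *\<^sub>R U s) \<in> borel_measurable borel"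
    using assms by (intro borel_measurable_continuous_on_indicator) auto
  have m2: "(\<lambda>s. indicator {..0::real} s *\<^sub>R U 1) \<in> borel_measurable borel"
    by measurable
  have "(\<lambda>s. if s > 0 then U s else U 1) = (\<lambda>s. indicator {0<..} s *\<^sub>R U s + indicator {..0::real} s *\<^sub>R U 1)"
    by (auto simp: fun_eq_iff split: split_indicator)
  then show ?thesis using m1 m2 by simp
qed

lemma borel_triple_conv:
  "f \<in> borel_measurable (borel \<Otimes>\<^sub>M (borel \<Otimes>\<^sub>M borel)) \<Longrightarrow> f \<in> borel_measurable (borel :: (real\<times>real\<times>real) measure)"
  by (simp add: borel_prod)

lemma borel_pair_conv:
  "f \<in> borel_measurable (borel \<Otimes>\<^sub>M borel) \<Longrightarrow> f \<in> borel_measurable (borel :: (real\<times>real) measure)"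
  by (simp add: borel_prod)

lemma part_a:
  fixes Phi :: "real \<times> real \<Rightarrow> real" and U U' :: "real \<Rightarrow> real"
  assumes Phi_meas[measurable]: "Phi \<in> borel_measurable borel"
    and Phi_nonneg: "\<And>z. Phi z \<ge> 0"
    and dU: "\<forall>r>0. (U has_real_derivative U' r) (at r)"
    and hU: "\<forall>r>0. (\<integral>\<^sup>+ s\<in>{0..r}. ennreal (s^2) * nr_rho Phi U (radpt s) \<partial>lborel) \<noteq> \<infinity> \<and>
               U' r = 4 * pi / r^2 *
                 enn2real (\<integral>\<^sup>+ s\<in>{0..r}. ennreal (s^2) * nr_rho Phi U (radpt s) \<partial>lborel)"
    and M: "(\<integral>\<^sup>+ x. nr_rho Phi U x \<partial>lborel) < \<infinity>"
  shows "\<exists>U_inf. (U \<longlongrightarrow> U_inf) at_top \<and>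
             (AE z in lborel. fst z > U_inf \<and> snd z > 0 \<longrightarrow> Phi z = 0)"
proof -
  have contU: "continuous_on {0<..} U"
    using dU by (intro continuous_at_imp_continuous_on) (auto intro: DERIV_continuous)
  define Ut where "Ut s = (if s > 0 then U s else U 1)" for s
  have Utm[measurable]: "Ut \<in> borel_measurable borel"
    unfolding Ut_def[abs_def] by (rule measurable_extend_pos[OF contU])
  define G where "G s t L = Phi (1/2 * t + Ut s, L)" for s t L
  have Gm: "(\<lambda>p. G (fst p) (fst (snd p)) (snd (snd p))) \<in> borel_measurable borel"
    unfolding G_def by (intro borel_triple_conv) measurable
  note mG[measurable (raw)] = meas_comp3[OF Gm]
  have G0: "G s t L \<ge> 0" for s t L by (simp add: G_def Phi_nonneg)
  define rt where "rt s = (\<integral>\<^sup>+v. ennreal (G s ((norm v)^2) (angmom (radpt s) v)) \<partial>lborel)" for s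
  define J where "J = (\<integral>\<^sup>+s. ennreal (s^2) * indicator {0..} s * rt s \<partial>lborel)"
  have rho_rad: "nr_rho Phi U (radpt s) = rt s" if "s > 0" for s
    using that unfolding nr_rho_def nr_f_def rt_def G_def Ut_def by simp
  have "(\<integral>\<^sup>+ x. nr_rho Phi U x \<partial>lborel) =
      (\<integral>\<^sup>+x. (\<integral>\<^sup>+v. ennreal (G (norm x) ((norm v)^2) (angmom x v)) \<partial>lborel) \<partial>lborel)"
  proof (rule nn_integral_cong_AE)
    show "AE x in lborel. nr_rho Phi U x = (\<integral>\<^sup>+v. ennreal (G (norm x) ((norm v)^2) (angmom x v)) \<partial>lborel)"
      using AE_lborel_singleton[of "0::real^3"]
      by eventually_elim (simp add: nr_rho_def nr_f_def G_def Ut_def)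
  qed
  also have "\<dots> = ennreal (4 * pi) * J"
    unfolding J_def rt_def by (rule mass_polar[OF Gm])
  finally have "ennreal (4 * pi) * J < \<infinity>" using M by simp
  then have Jfin: "J < \<infinity>" by (auto simp: ennreal_mult_less_top top.not_eq_extremum)
  define Jr where "Jr = enn2real J"
  have Jr0: "Jr \<ge> 0" by (simp add: Jr_def)
  have Ile: "(\<integral>\<^sup>+ s\<in>{0..r}. ennreal (s^2) * nr_rho Phi U (radpt s) \<partial>lborel) \<le> J" for r
    unfolding J_def
  proof (intro nn_integral_mono)
    fix s :: real
    show "ennreal (s^2) * nr_rho Phi U (radpt s) * indicator {0..r} s \<le> ennreal (s^2) * indicator {0..} s * rt s"
    proof (cases "s > 0")
      case True then show ?thesis by (simp add: rho_rad split: split_indicator)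
    next
      case False then show ?thesis by (cases "s = 0") (auto split: split_indicator)
    qed
  qed
  have U'0: "U' r \<ge> 0" if "r > 0" for r
    using hU that by simp
  have U'le: "U' r \<le> 4 * pi * Jr / r^2" if "r > 0" for r
  proof -
    have "enn2real (\<integral>\<^sup>+ s\<in>{0..r}. ennreal (s^2) * nr_rho Phi U (radpt s) \<partial>lborel) \<le> Jr"
      unfolding Jr_def using Ile[of r] Jfin by (intro enn2real_mono) auto
    then show ?thesis using hU that
      by (simp add: divide_simps mult_left_mono)
  qed
  have Umono: "U x \<le> U y" if "1 \<le> x" "x \<le> y" for x y
  proof (rule DERIV_nonneg_imp_nondecreasing[of x y U])
    show "x \<le> y" by fact
    fix z assume z: "x \<le> z" "z \<le> y"
    then have "z > 0" using that by simp
    then show "\<exists>d. (U has_real_derivative d) (at z) \<and> 0 \<le> d"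
      using dU U'0 by blast
  qed
  have Ubd: "U x \<le> U 1 + 4 * pi * Jr" if "1 \<le> x" for x
  proof -
    let ?h = "\<lambda>r. U r + 4 * pi * Jr / r"
    have "?h x \<le> ?h 1"
    proof (rule DERIV_nonpos_imp_nonincreasing[OF that])
      fix y assume y: "1 \<le> y" "y \<le> x"
      have "(?h has_real_derivative U' y + 4 * pi * Jr * (- 1 / y^2)) (at y)"
        using dU y by (auto intro!: derivative_eq_intros simp: power2_eq_square)
      moreover have "U' y + 4 * pi * Jr * (- 1 / y^2) \<le> 0"
        using U'le[of y] y by (simp add: divide_simps)
      ultimately show "\<exists>z. (?h has_real_derivative z) (at y) \<and> z \<le> 0" by blast
    qed
    moreover have "4 * pi * Jr / x \<ge> 0" using that Jr0 by simp
    ultimately show ?thesis by simp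
  qed
  obtain l where lim: "(U \<longlongrightarrow> l) at_top" and Ul: "\<And>x. 1 \<le> x \<Longrightarrow> U x \<le> l"
    using mono_bdd_lim[of 1 U, OF Umono Ubd] by blast
  define B where "B s L = 1/2 * (L / s^2) + Ut s" for s L
  define w where "w E = 1 / sqrt (2 * max (E - U 1) 0)" for E
  have "AE z in lborel. l < fst z \<and> snd z > 0 \<longrightarrow> Phi z = 0"
  proof (rule gen_conclude[OF Phi_meas Phi_nonneg Gm G0])
    show "(\<lambda>p. B (fst p) (snd p)) \<in> borel_measurable borel" unfolding B_def by (intro borel_pair_conv) measurable
    show "w \<in> borel_measurable borel" unfolding w_def by measurable
    show "w E \<ge> 0" for E unfolding w_def by simp
    show "(\<integral>\<^sup>+s. ennreal (s^2) * indicator {1..} s *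
              (\<integral>\<^sup>+v. ennreal (G s ((norm v)^2) (angmom (radpt s) v)) \<partial>lborel) \<partial>lborel) < \<infinity>"
    proof -
      have "(\<integral>\<^sup>+s. ennreal (s^2) * indicator {1..} s *
              (\<integral>\<^sup>+v. ennreal (G s ((norm v)^2) (angmom (radpt s) v)) \<partial>lborel) \<partial>lborel) \<le> J"
        unfolding J_def rt_def
        by (intro nn_integral_mono) (auto split: split_indicator)
      then show ?thesis using Jfin by (rule le_less_trans)
    qed
    fix E L :: real
    assume E: "l < E" and L: "0 < L"
    have U1: "U 1 \<le> l" using Ul[of 1] by simp
    show "w E > 0 \<and> (\<exists>S0. \<forall>s\<ge>S0. B s L < E)"
    proof
      show "w E > 0" unfolding w_def using E U1 by simp
      obtain S0 where S0: "S0 \<ge> 1" "\<And>s. s \<ge> S0 \<Longrightarrow> L / s^2 < 2 * (E - l)"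
        using eventually_small_quot[of "2 * (E - l)" L] E L by auto
      show "\<exists>S0. \<forall>s\<ge>S0. B s L < E"
      proof (intro exI allI impI)
        fix s assume s: "S0 \<le> s"
        then have "s > 0" "1 \<le> s" using S0 by auto
        then show "B s L < E" using S0(2)[OF s] Ul[of s] unfolding B_def Ut_def by simp
      qed
    qed
  next
    fix s L :: real
    assume s: "1 \<le> s" and L: "0 < L"
    then have spos: "s > 0" by simp
    define g where "g a = 1/2 * (a^2 + L / s^2) + Ut s" for a
    have g0: "g 0 = B s L" by (simp add: g_def B_def)
    have "(\<integral>\<^sup>+E. ennreal (Phi (E, L) * w E) * indicator {B s L<..} E \<partial>lborel)
        \<le> (\<integral>\<^sup>+E. ennreal (Phi (E, L) * w E) * indicator {g 0..} E \<partial>lborel)"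
      unfolding g0 by (intro nn_integral_mono) (auto split: split_indicator)
    also have "\<dots> = (\<integral>\<^sup>+a. ennreal (Phi (g a, L) * w (g a) * a) * indicator {0..} a \<partial>lborel)"
    proof (rule nn_integral_substitution_halfline[where f="\<lambda>E. Phi (E, L) * w E", symmetric])
      show "(\<lambda>E. Phi (E, L) * w E) \<in> borel_measurable borel" unfolding w_def by measurable
      show "Phi (E, L) * w E \<ge> 0" for E unfolding w_def by (simp add: Phi_nonneg)
      show "(g has_real_derivative a) (at a)" for a
        unfolding g_def by (auto intro!: derivative_eq_intros)
      show "continuous_on UNIV (\<lambda>a::real. a)" by (intro continuous_intros)
      show "0 \<le> a \<Longrightarrow> 0 \<le> a" for a :: real by simp
      show "filterlim g at_top at_top"
      proof (rule filterlim_at_top_ge_id[where N="max 3 (- 2 * Ut s)"])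
        fix x :: real assume x: "max 3 (- 2 * Ut s) \<le> x"
        then have x1: "3 \<le> x" "- 2 * Ut s \<le> x" by auto
        then have x3: "3 * x \<le> x * x" by (intro mult_right_mono) auto
        have "x \<le> 1/2 * x^2 + Ut s" using x1 x3 unfolding power2_eq_square by linarith
        also have "\<dots> \<le> g x" unfolding g_def using L by simp
        finally show "x \<le> g x" .
      qed
    qed
    also have "\<dots> \<le> (\<integral>\<^sup>+a. ennreal (G s (a^2 + L / s^2) L) * indicator {0<..} a \<partial>lborel)"
    proof (intro nn_integral_mono)
      fix a :: real
      show "ennreal (Phi (g a, L) * w (g a) * a) * indicator {0..} a \<le> ennreal (G s (a^2 + L / s^2) L) * indicator {0<..} a"
      proof (cases "a > 0")
        case True
        have Us: "U 1 \<le> Ut s" unfolding Ut_def using Umono[of 1 s] s by simp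
        have Lq: "L / s^2 \<ge> 0" using L by simp
        have "a^2 \<le> 2 * (g a - U 1)"
          unfolding g_def using Us Lq by (simp add: ring_distribs)
        also have "\<dots> \<le> 2 * max (g a - U 1) 0" by (intro mult_left_mono) auto
        finally have "a^2 \<le> 2 * max (g a - U 1) 0" .
        then have "sqrt (a^2) \<le> sqrt (2 * max (g a - U 1) 0)" by (rule real_sqrt_le_mono)
        then have asq: "a \<le> sqrt (2 * max (g a - U 1) 0)" using True by simp
        define q where "q = sqrt (2 * max (g a - U 1) 0)"
        have qa: "a \<le> q" using asq unfolding q_def by simp
        then have qa2: "q > 0" using True by linarith
        have "w (g a) * a = a / q" unfolding w_def q_def by simp
        also have "\<dots> \<le> 1" using qa qa2 by simp
        finally have "w (g a) * a \<le> 1" .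
        then have "Phi (g a, L) * w (g a) * a \<le> Phi (g a, L)"
          using Phi_nonneg[of "(g a, L)"] by (simp add: mult.assoc mult_left_le)
        moreover have "G s (a^2 + L / s^2) L = Phi (g a, L)" by (simp add: G_def g_def)
        ultimately show ?thesis using True by (simp add: ennreal_leI)
      next
        case False then show ?thesis by (cases "a = 0") auto
      qed
    qed
    finally show "(\<integral>\<^sup>+E. ennreal (Phi (E, L) * w E) * indicator {B s L<..} E \<partial>lborel)
        \<le> (\<integral>\<^sup>+a. ennreal (G s (a^2 + L / s^2) L) * indicator {0<..} a \<partial>lborel)" .
  qed
  then show ?thesis using lim by blast
qed

lemma filterlim_at_top_ge_lin:
  fixes g :: "real \<Rightarrow> real"
  assumes c: "c > 0" and ge: "\<And>x. x \<ge> N \<Longrightarrow> c * x \<le> g x"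
  shows "filterlim g at_top at_top"
proof (rule filterlim_at_top_mono)
  show "filterlim (\<lambda>x. c * x) at_top at_top"
    by (rule filterlim_tendsto_pos_mult_at_top[OF tendsto_const c filterlim_ident])
  show "\<forall>\<^sub>F x in at_top. c * x \<le> g x"
    using ge by (auto simp: eventually_at_top_linorder)
qed

lemma rel_p_le_rho: "rel_p Phi mu x \<le> rel_rho Phi mu x"
  if Phi0: "\<And>z. Phi z \<ge> 0" for Phi :: "real \<times> real \<Rightarrow> real"
  unfolding rel_p_def rel_rho_def
proof (intro nn_integral_mono ennreal_leI)
  fix v :: "real^3"
  let ?s = "sqrt (1 + (norm v)^2)" and ?f = "rel_f Phi mu x v"
  have f0: "?f \<ge> 0" unfolding rel_f_def by (rule Phi0)
  have spos: "?s > 0" by (simp add: add_pos_nonneg)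
  have A: "((x \<bullet> v) / norm x)^2 \<le> ?s^2"
  proof (cases "x = 0")
    case True then show ?thesis by simp
  next
    case False
    have "\<bar>x \<bullet> v\<bar> \<le> norm x * norm v" by (rule Cauchy_Schwarz_ineq2)
    then have "\<bar>(x \<bullet> v) / norm x\<bar> \<le> norm v" using False by (simp add: divide_le_eq mult.commute)
    then have "((x \<bullet> v) / norm x)^2 \<le> (norm v)^2"
      by (metis abs_ge_zero norm_ge_zero power2_abs power_mono)
    also have "\<dots> \<le> ?s^2" by simp
    finally show ?thesis .
  qed
  have "((x \<bullet> v) / norm x)^2 * ?f / ?s \<le> ?s^2 * ?f / ?s"
    using A f0 spos by (intro divide_right_mono mult_right_mono) auto
  also have "\<dots> = ?s * ?f"
  proof -
    have gen: "\<And>s f. s > 0 \<Longrightarrow> s^2 * f / s = s * (f::real)" by (simp add: power2_eq_square)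
    show ?thesis by (rule gen[OF spos])
  qed
  finally show "((x \<bullet> v) / norm x)^2 * ?f / ?s \<le> ?s * ?f" .
qed

lemma part_b:
  fixes Phi :: "real \<times> real \<Rightarrow> real" and lam mu lam' mu' :: "real \<Rightarrow> real"
  assumes Phi_meas[measurable]: "Phi \<in> borel_measurable borel"
    and Phi_nonneg: "\<And>z. Phi z \<ge> 0"
    and dl: "\<forall>r>0. (lam has_real_derivative lam' r) (at r)"
    and dm: "\<forall>r>0. (mu has_real_derivative mu' r) (at r)"
    and heq: "\<forall>r>0. rel_rho Phi mu (radpt r) \<noteq> \<infinity> \<and> rel_p Phi mu (radpt r) \<noteq> \<infinity> \<and>
           exp (-2 * lam r) * (2 * r * lam' r - 1) + 1
             = 8 * pi * r^2 * enn2real (rel_rho Phi mu (radpt r)) \<and>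
           exp (-2 * lam r) * (2 * r * mu' r + 1) - 1
             = 8 * pi * r^2 * enn2real (rel_p Phi mu (radpt r))"
    and hm: "\<forall>r>0. (\<integral>\<^sup>+ s\<in>{0..r}. ennreal (s^2) * rel_rho Phi mu (radpt s) \<partial>lborel) \<noteq> \<infinity> \<and>
               exp (-2 * lam r) = 1 - 2 * (4 * pi *
                 enn2real (\<integral>\<^sup>+ s\<in>{0..r}. ennreal (s^2) * rel_rho Phi mu (radpt s) \<partial>lborel)) / r"
    and M: "(\<integral>\<^sup>+ x. rel_rho Phi mu x \<partial>lborel) < \<infinity>"
  shows "\<exists>mu_inf. (mu \<longlongrightarrow> mu_inf) at_top \<and>
             (AE z in lborel. fst z > exp mu_inf \<and> snd z > 0 \<longrightarrow> Phi z = 0)"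
proof -
  have contmu: "continuous_on {0<..} mu"
    using dm by (intro continuous_at_imp_continuous_on) (auto intro: DERIV_continuous)
  define mut where "mut s = (if s > 0 then mu s else mu 1)" for s
  have mutm[measurable]: "mut \<in> borel_measurable borel"
    unfolding mut_def[abs_def] by (rule measurable_extend_pos[OF contmu])
  define G where "G s t L = \<bar>sqrt (1 + t)\<bar> * Phi (exp (mut s) * sqrt (1 + t), L)" for s t L
  have Gm: "(\<lambda>p. G (fst p) (fst (snd p)) (snd (snd p))) \<in> borel_measurable borel"
    unfolding G_def by (intro borel_triple_conv) measurable
  note mG[measurable (raw)] = meas_comp3[OF Gm]
  have G0: "G s t L \<ge> 0" for s t L by (simp add: G_def Phi_nonneg)
  define rt where "rt s = (\<integral>\<^sup>+v. ennreal (G s ((norm v)^2) (angmom (radpt s) v)) \<partial>lborel)" for s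
  define J where "J = (\<integral>\<^sup>+s. ennreal (s^2) * indicator {0..} s * rt s \<partial>lborel)"
  have rho_rad: "rel_rho Phi mu (radpt s) = rt s" if "s > 0" for s
    using that unfolding rel_rho_def rel_f_def rt_def G_def mut_def by simp
  have "(\<integral>\<^sup>+ x. rel_rho Phi mu x \<partial>lborel) =
      (\<integral>\<^sup>+x. (\<integral>\<^sup>+v. ennreal (G (norm x) ((norm v)^2) (angmom x v)) \<partial>lborel) \<partial>lborel)"
  proof (rule nn_integral_cong_AE)
    show "AE x in lborel. rel_rho Phi mu x = (\<integral>\<^sup>+v. ennreal (G (norm x) ((norm v)^2) (angmom x v)) \<partial>lborel)"
      using AE_lborel_singleton[of "0::real^3"]
      by eventually_elim (simp add: rel_rho_def rel_f_def G_def mut_def)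
  qed
  also have "\<dots> = ennreal (4 * pi) * J"
    unfolding J_def rt_def by (rule mass_polar[OF Gm])
  finally have "ennreal (4 * pi) * J < \<infinity>" using M by simp
  then have Jfin: "J < \<infinity>" by (auto simp: ennreal_mult_less_top top.not_eq_extremum)
  define Jr where "Jr = enn2real J"
  have Jr0: "Jr \<ge> 0" by (simp add: Jr_def)
  have Ile: "(\<integral>\<^sup>+ s\<in>{0..r}. ennreal (s^2) * rel_rho Phi mu (radpt s) \<partial>lborel) \<le> J" for r
    unfolding J_def
  proof (intro nn_integral_mono)
    fix s :: real
    show "ennreal (s^2) * rel_rho Phi mu (radpt s) * indicator {0..r} s \<le> ennreal (s^2) * indicator {0..} s * rt s"
    proof (cases "s > 0")
      case True then show ?thesis by (simp add: rho_rad split: split_indicator)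
    next
      case False then show ?thesis by (cases "s = 0") (auto split: split_indicator)
    qed
  qed
  define m where "m r = 4 * pi * enn2real (\<integral>\<^sup>+ s\<in>{0..r}. ennreal (s^2) * rel_rho Phi mu (radpt s) \<partial>lborel)" for r
  define mi where "mi = 4 * pi * Jr"
  have m0: "m r \<ge> 0" for r by (simp add: m_def)
  have mle: "m r \<le> mi" for r
  proof -
    have "enn2real (\<integral>\<^sup>+ s\<in>{0..r}. ennreal (s^2) * rel_rho Phi mu (radpt s) \<partial>lborel) \<le> Jr"
      unfolding Jr_def using Ile[of r] Jfin by (intro enn2real_mono) auto
    then show ?thesis unfolding m_def mi_def by simp
  qed
  have mi0: "mi \<ge> 0" using m0 mle order_trans by blast
  have D: "exp (-2 * lam r) = 1 - 2 * m r / r" if "r > 0" for r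
    using hm that unfolding m_def by simp
  define rho where "rho r = enn2real (rel_rho Phi mu (radpt r))" for r
  define p where "p r = enn2real (rel_p Phi mu (radpt r))" for r
  have p0: "p r \<ge> 0" for r by (simp add: p_def)
  have prho: "p r \<le> rho r" if "r > 0" for r
    unfolding p_def rho_def using heq that rel_p_le_rho[OF Phi_nonneg, where mu=mu and x="radpt r"]
    by (intro enn2real_mono) (auto simp: top.not_eq_extremum)
  have eq1: "exp (-2 * lam r) * (2 * r * lam' r - 1) + 1 = 8 * pi * r^2 * rho r" if "r > 0" for r
    using heq that unfolding rho_def by simp
  have eq2: "exp (-2 * lam r) * (2 * r * mu' r + 1) - 1 = 8 * pi * r^2 * p r" if "r > 0" for r
    using heq that unfolding p_def by simp
  have mu'0: "mu' r \<ge> 0" if r: "r > 0" for r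
  proof (rule ccontr)
    assume neg: "\<not> mu' r \<ge> 0"
    let ?D = "exp (-2 * lam r)"
    have Dle: "?D \<le> 1" using D[OF r] m0[of r] r by simp
    have Dpos: "?D > 0" by simp
    have "2 * r * mu' r + 1 < 1" using neg r by (simp add: mult_pos_neg)
    then have "?D * (2 * r * mu' r + 1) < ?D * 1" using Dpos by (intro mult_strict_left_mono)
    also have "\<dots> \<le> 1" using Dle by simp
    finally have "?D * (2 * r * mu' r + 1) - 1 < 0" by simp
    moreover have "8 * pi * r^2 * p r \<ge> 0" using p0[of r] by simp
    ultimately show False using eq2[OF r] by linarith
  qed
  define R0 where "R0 = max 1 (4 * mi)"
  have R0: "R0 \<ge> 1" "R0 \<ge> 4 * mi" by (auto simp: R0_def)
  have Dhalf: "exp (-2 * lam r) \<ge> 1/2" if r: "r \<ge> R0" for r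
  proof -
    have rpos: "r > 0" using r R0 by simp
    have "2 * m r \<le> 2 * mi" using mle[of r] by simp
    also have "\<dots> \<le> r / 2" using r R0 by simp
    finally have "2 * m r / r \<le> 1/2" using rpos by (simp add: divide_le_eq)
    then show ?thesis using D[OF rpos] by simp
  qed
  have lam_le: "lam r \<le> ln 2 / 2" if r: "r \<ge> R0" for r
  proof -
    have "ln (1/2) \<le> ln (exp (-2 * lam r))" using Dhalf[OF r] by (subst ln_le_cancel_iff) auto
    then have "- ln 2 \<le> -2 * lam r" by (simp add: ln_div)
    then show ?thesis by simp
  qed
  have dd: "mu' r - lam' r \<le> 4 * mi / r^2" if r: "r \<ge> R0" for r
  proof -
    have rpos: "r > 0" using r R0 by simp
    let ?D = "exp (-2 * lam r)"
    have Dpos: "?D > 0" by simp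
    have "?D * (2 * r * mu' r + 1) - 1 - (?D * (2 * r * lam' r - 1) + 1) = 8 * pi * r^2 * (p r - rho r)"
      using eq1[OF rpos] eq2[OF rpos] by (simp add: algebra_simps)
    also have "\<dots> \<le> 0" using prho[OF rpos] by (simp add: mult_nonneg_nonpos)
    finally have "?D * (2 * r * (mu' r - lam' r)) \<le> 2 - 2 * ?D" by (simp add: algebra_simps)
    then have A: "r * (mu' r - lam' r) \<le> (1 - ?D) / ?D" using Dpos by (simp add: field_simps)
    have "1 - ?D = 2 * m r / r" using D[OF rpos] by simp
    also have "\<dots> \<le> 2 * mi / r" using mle[of r] rpos by (simp add: divide_right_mono)
    finally have B: "1 - ?D \<le> 2 * mi / r" .
    have "(1 - ?D) / ?D \<le> (2 * mi / r) / (1/2)"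
      using B Dhalf[OF r] Dpos mi0 rpos
      by (intro frac_le) (auto simp: D[OF rpos] m0)
    also have "\<dots> = 4 * mi / r" by simp
    finally have "r * (mu' r - lam' r) \<le> 4 * mi / r" using A by linarith
    then show ?thesis using rpos by (simp add: power2_eq_square field_simps)
  qed
  define h where "h r = mu r - lam r + 4 * mi / r" for r
  have hdec: "h r \<le> h R0" if r: "r \<ge> R0" for r
  proof (rule DERIV_nonpos_imp_nonincreasing[OF r])
    fix y assume y: "R0 \<le> y" "y \<le> r"
    then have ypos: "y > 0" using R0 by simp
    have "(h has_real_derivative mu' y - lam' y + 4 * mi * (- 1 / y^2)) (at y)"
      unfolding h_def using dm dl ypos by (auto intro!: derivative_eq_intros simp: power2_eq_square)
    moreover have "mu' y - lam' y + 4 * mi * (- 1 / y^2) \<le> 0"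
      using dd[OF y(1)] by simp
    ultimately show "\<exists>z. (h has_real_derivative z) (at y) \<and> z \<le> 0" by blast
  qed
  have mumono: "mu x \<le> mu y" if "1 \<le> x" "x \<le> y" for x y
  proof (rule DERIV_nonneg_imp_nondecreasing[of x y mu])
    show "x \<le> y" by fact
    fix z assume z: "x \<le> z" "z \<le> y"
    then have "z > 0" using that by simp
    then show "\<exists>d. (mu has_real_derivative d) (at z) \<and> 0 \<le> d"
      using dm mu'0 by blast
  qed
  have mubd: "mu x \<le> h R0 + ln 2 / 2" if "1 \<le> x" for x
  proof (cases "x \<ge> R0")
    case True
    have "mu x = h x + lam x - 4 * mi / x" unfolding h_def by simp
    also have "\<dots> \<le> h R0 + ln 2 / 2 - 4 * mi / x" using hdec[OF True] lam_le[OF True] by simp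
    also have "\<dots> \<le> h R0 + ln 2 / 2" using mi0 True R0 by simp
    finally show ?thesis .
  next
    case False
    have "mu x \<le> mu R0" using that False by (intro mumono) auto
    also have "mu R0 = h R0 + lam R0 - 4 * mi / R0" unfolding h_def by simp
    also have "\<dots> \<le> h R0 + ln 2 / 2"
    proof -
      have "4 * mi / R0 \<ge> 0" using mi0 R0 by simp
      then show ?thesis using lam_le[OF order_refl] by linarith
    qed
    finally show ?thesis .
  qed
  obtain l where lim: "(mu \<longlongrightarrow> l) at_top" and mul: "\<And>x. 1 \<le> x \<Longrightarrow> mu x \<le> l"
    using mono_bdd_lim[of 1 mu, OF mumono mubd] by blast
  define B where "B s L = exp (mut s) * sqrt (1 + L / s^2)" for s L
  define w where "w E = max E 0 * exp (-2 * l)" for E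
  have "AE z in lborel. exp l < fst z \<and> snd z > 0 \<longrightarrow> Phi z = 0"
  proof (rule gen_conclude[OF Phi_meas Phi_nonneg Gm G0])
    show "(\<lambda>p. B (fst p) (snd p)) \<in> borel_measurable borel" unfolding B_def by (intro borel_pair_conv) measurable
    show "w \<in> borel_measurable borel" unfolding w_def by measurable
    show "w E \<ge> 0" for E unfolding w_def by simp
    show "(\<integral>\<^sup>+s. ennreal (s^2) * indicator {1..} s *
              (\<integral>\<^sup>+v. ennreal (G s ((norm v)^2) (angmom (radpt s) v)) \<partial>lborel) \<partial>lborel) < \<infinity>"
    proof -
      have "(\<integral>\<^sup>+s. ennreal (s^2) * indicator {1..} s *
              (\<integral>\<^sup>+v. ennreal (G s ((norm v)^2) (angmom (radpt s) v)) \<partial>lborel) \<partial>lborel) \<le> J"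
        unfolding J_def rt_def
        by (intro nn_integral_mono) (auto split: split_indicator)
      then show ?thesis using Jfin by (rule le_less_trans)
    qed
    fix E L :: real
    assume E: "exp l < E" and L: "0 < L"
    have Epos: "E > 0" using E by (meson exp_gt_zero less_trans)
    show "w E > 0 \<and> (\<exists>S0. \<forall>s\<ge>S0. B s L < E)"
    proof
      show "w E > 0" unfolding w_def using Epos by simp
      define \<kappa> where "\<kappa> = E / exp l"
      have k1: "\<kappa> > 1" unfolding \<kappa>_def using E by simp
      have "\<kappa>^2 - 1 > 0" using k1 by (smt (verit) one_less_power zero_less_numeral)
      then obtain S0 where S0: "S0 \<ge> 1" "\<And>s. s \<ge> S0 \<Longrightarrow> L / s^2 < \<kappa>^2 - 1"
        using eventually_small_quot[of "\<kappa>^2 - 1" L] L by auto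
      show "\<exists>S0. \<forall>s\<ge>S0. B s L < E"
      proof (intro exI allI impI)
        fix s assume s: "S0 \<le> s"
        then have spos: "s > 0" "1 \<le> s" using S0 by auto
        have "sqrt (1 + L / s^2) < sqrt (\<kappa>^2)"
          using S0(2)[OF s] by (subst real_sqrt_less_iff) linarith
        then have sq: "sqrt (1 + L / s^2) < \<kappa>" using k1 by simp
        have "B s L = exp (mu s) * sqrt (1 + L / s^2)" unfolding B_def mut_def using spos by simp
        also have "\<dots> \<le> exp l * sqrt (1 + L / s^2)"
          using mul[OF spos(2)] L by (intro mult_right_mono) (auto intro: add_nonneg_nonneg)
        also have "\<dots> < exp l * \<kappa>" using sq by simp
        also have "\<dots> = E" unfolding \<kappa>_def by simp
        finally show "B s L < E" .
      qed
    qed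
  next
    fix s L :: real
    assume s: "1 \<le> s" and L: "0 < L"
    then have spos: "s > 0" by simp
    have muts: "mut s \<le> l" unfolding mut_def using spos mul[OF s] by simp
    define Q where "Q a = sqrt (1 + (a^2 + L / s^2))" for a
    have Qpos: "Q a > 0" for a unfolding Q_def using L by (intro real_sqrt_gt_zero) (simp add: add_pos_nonneg)
    have Qge: "a \<le> Q a" for a
    proof -
      have "a \<le> sqrt (a^2)" by simp
      also have "\<dots> \<le> Q a" unfolding Q_def using L by (intro real_sqrt_le_mono) simp
      finally show ?thesis .
    qed
    define g where "g a = exp (mut s) * Q a" for a
    define g' where "g' a = exp (mut s) * a / Q a" for a
    have g0: "g 0 = B s L" by (simp add: g_def Q_def B_def)
    have "(\<integral>\<^sup>+E. ennreal (Phi (E, L) * w E) * indicator {B s L<..} E \<partial>lborel)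
        \<le> (\<integral>\<^sup>+E. ennreal (Phi (E, L) * w E) * indicator {g 0..} E \<partial>lborel)"
      unfolding g0 by (intro nn_integral_mono) (auto split: split_indicator)
    also have "\<dots> = (\<integral>\<^sup>+a. ennreal (Phi (g a, L) * w (g a) * g' a) * indicator {0..} a \<partial>lborel)"
    proof (rule nn_integral_substitution_halfline[where f="\<lambda>E. Phi (E, L) * w E", symmetric])
      show "(\<lambda>E. Phi (E, L) * w E) \<in> borel_measurable borel" unfolding w_def by measurable
      show "Phi (E, L) * w E \<ge> 0" for E unfolding w_def by (simp add: Phi_nonneg)
      show "(g has_real_derivative g' a) (at a)" for a
      proof -
        have pos: "0 < 1 + (a^2 + L / s^2)" using L by (simp add: add_pos_nonneg)
        show ?thesis
          unfolding g_def g'_def Q_def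
          using pos by (auto intro!: derivative_eq_intros simp: field_simps)
      qed
      show "continuous_on UNIV g'"
      proof -
        have pos: "0 < 1 + (a^2 + L / s^2)" for a using L by (simp add: add_pos_nonneg)
        show ?thesis
          unfolding g'_def Q_def
          by (intro continuous_intros) (metis pos order_less_irrefl real_sqrt_eq_zero_cancel_iff)
      qed
      show "0 \<le> a \<Longrightarrow> 0 \<le> g' a" for a unfolding g'_def using Qpos[of a] by simp
      show "filterlim g at_top at_top"
      proof (rule filterlim_at_top_ge_lin[where c="exp (mut s)" and N=0])
        show "exp (mut s) > 0" by simp
        fix x :: real assume "0 \<le> x"
        show "exp (mut s) * x \<le> g x" unfolding g_def using Qge[of x] by simp
      qed
    qed
    also have "\<dots> \<le> (\<integral>\<^sup>+a. ennreal (G s (a^2 + L / s^2) L) * indicator {0<..} a \<partial>lborel)"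
    proof (intro nn_integral_mono)
      fix a :: real
      show "ennreal (Phi (g a, L) * w (g a) * g' a) * indicator {0..} a \<le> ennreal (G s (a^2 + L / s^2) L) * indicator {0<..} a"
      proof (cases "a > 0")
        case True
        have gpos: "g a > 0" unfolding g_def using Qpos[of a] by simp
        have "w (g a) * g' a = (exp (mut s) * exp (mut s) * exp (-2 * l)) * a"
          unfolding w_def g'_def using gpos Qpos[of a] unfolding g_def by (simp add: field_simps)
        also have "exp (mut s) * exp (mut s) * exp (-2 * l) = exp (2 * (mut s - l))"
          by (simp add: exp_add[symmetric] algebra_simps)
        also have "exp (2 * (mut s - l)) * a \<le> 1 * a"
          using muts True by (intro mult_right_mono) auto
        also have "\<dots> \<le> Q a" using Qge[of a] by simp
        finally have wg: "w (g a) * g' a \<le> Q a" .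
        have "Phi (g a, L) * w (g a) * g' a \<le> Q a * Phi (g a, L)"
        proof -
          have "Phi (g a, L) * w (g a) * g' a = (w (g a) * g' a) * Phi (g a, L)" by (simp add: ac_simps)
          also have "\<dots> \<le> Q a * Phi (g a, L)"
            using Phi_nonneg[of "(g a, L)"] wg by (rule mult_right_mono[rotated])
          finally show ?thesis .
        qed
        moreover have "G s (a^2 + L / s^2) L = Q a * Phi (g a, L)"
          using Qpos[of a] unfolding G_def g_def Q_def by simp
        ultimately show ?thesis using True by (simp add: ennreal_leI)
      next
        case False then show ?thesis by (cases "a = 0") (auto simp: g'_def)
      qed
    qed
    finally show "(\<integral>\<^sup>+E. ennreal (Phi (E, L) * w E) * indicator {B s L<..} E \<partial>lborel)
        \<le> (\<integral>\<^sup>+a. ennreal (G s (a^2 + L / s^2) L) * indicator {0<..} a \<partial>lborel)" .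
  qed
  then show ?thesis using lim by blast
qed

theorem theorem2p1:
  fixes Phi :: "real \<times> real \<Rightarrow> real"
  assumes Phi_meas: "Phi \<in> borel_measurable borel"
    and Phi_nonneg: "\<And>z. Phi z \<ge> 0"
  shows
    "(\<forall>U U'.
        (\<forall>r>0. (U has_real_derivative U' r) (at r)) \<and>
        continuous_on {0<..} U' \<and>
        (\<forall>r>0. (\<integral>\<^sup>+ s\<in>{0..r}. ennreal (s^2) * nr_rho Phi U (radpt s) \<partial>lborel) \<noteq> \<infinity> \<and>
               U' r = 4 * pi / r^2 *
                 enn2real (\<integral>\<^sup>+ s\<in>{0..r}. ennreal (s^2) * nr_rho Phi U (radpt s) \<partial>lborel)) \<and>
        (\<integral>\<^sup>+ x. nr_rho Phi U x \<partial>lborel) < \<infinity>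
      \<longrightarrow> (\<exists>U_inf. (U \<longlongrightarrow> U_inf) at_top \<and>
             (AE z in lborel. fst z > U_inf \<and> snd z > 0 \<longrightarrow> Phi z = 0)))
   \<and>
    (\<forall>lam mu lam' mu'.
        (\<forall>r>0. (lam has_real_derivative lam' r) (at r)) \<and>
        (\<forall>r>0. (mu has_real_derivative mu' r) (at r)) \<and>
        continuous_on {0<..} lam' \<and> continuous_on {0<..} mu' \<and>
        (\<forall>r>0. rel_rho Phi mu (radpt r) \<noteq> \<infinity> \<and> rel_p Phi mu (radpt r) \<noteq> \<infinity> \<and>
           exp (-2 * lam r) * (2 * r * lam' r - 1) + 1
             = 8 * pi * r^2 * enn2real (rel_rho Phi mu (radpt r)) \<and>
           exp (-2 * lam r) * (2 * r * mu' r + 1) - 1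
             = 8 * pi * r^2 * enn2real (rel_p Phi mu (radpt r))) \<and>
        (\<forall>r>0. (\<integral>\<^sup>+ s\<in>{0..r}. ennreal (s^2) * rel_rho Phi mu (radpt s) \<partial>lborel) \<noteq> \<infinity> \<and>
               exp (-2 * lam r) = 1 - 2 * (4 * pi *
                 enn2real (\<integral>\<^sup>+ s\<in>{0..r}. ennreal (s^2) * rel_rho Phi mu (radpt s) \<partial>lborel)) / r) \<and>
        (\<integral>\<^sup>+ x. rel_rho Phi mu x \<partial>lborel) < \<infinity>
      \<longrightarrow> (\<exists>mu_inf. (mu \<longlongrightarrow> mu_inf) at_top \<and>
             (AE z in lborel. fst z > exp mu_inf \<and> snd z > 0 \<longrightarrow> Phi z = 0)))"
proof (intro conjI allI impI)
  fix U U' :: "real \<Rightarrow> real"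
  assume h: "(\<forall>r>0. (U has_real_derivative U' r) (at r)) \<and>
        continuous_on {0<..} U' \<and>
        (\<forall>r>0. (\<integral>\<^sup>+ s\<in>{0..r}. ennreal (s^2) * nr_rho Phi U (radpt s) \<partial>lborel) \<noteq> \<infinity> \<and>
               U' r = 4 * pi / r^2 *
                 enn2real (\<integral>\<^sup>+ s\<in>{0..r}. ennreal (s^2) * nr_rho Phi U (radpt s) \<partial>lborel)) \<and>
        (\<integral>\<^sup>+ x. nr_rho Phi U x \<partial>lborel) < \<infinity>"
  then show "\<exists>U_inf. (U \<longlongrightarrow> U_inf) at_top \<and>
             (AE z in lborel. fst z > U_inf \<and> snd z > 0 \<longrightarrow> Phi z = 0)"
    using part_a[OF Phi_meas Phi_nonneg, of U U'] by blast
next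
  fix lam mu lam' mu' :: "real \<Rightarrow> real"
  assume h: "(\<forall>r>0. (lam has_real_derivative lam' r) (at r)) \<and>
        (\<forall>r>0. (mu has_real_derivative mu' r) (at r)) \<and>
        continuous_on {0<..} lam' \<and> continuous_on {0<..} mu' \<and>
        (\<forall>r>0. rel_rho Phi mu (radpt r) \<noteq> \<infinity> \<and> rel_p Phi mu (radpt r) \<noteq> \<infinity> \<and>
           exp (-2 * lam r) * (2 * r * lam' r - 1) + 1
             = 8 * pi * r^2 * enn2real (rel_rho Phi mu (radpt r)) \<and>
           exp (-2 * lam r) * (2 * r * mu' r + 1) - 1
             = 8 * pi * r^2 * enn2real (rel_p Phi mu (radpt r))) \<and>
        (\<forall>r>0. (\<integral>\<^sup>+ s\<in>{0..r}. ennreal (s^2) * rel_rho Phi mu (radpt s) \<partial>lborel) \<noteq> \<infinity> \<and>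
               exp (-2 * lam r) = 1 - 2 * (4 * pi *
                 enn2real (\<integral>\<^sup>+ s\<in>{0..r}. ennreal (s^2) * rel_rho Phi mu (radpt s) \<partial>lborel)) / r) \<and>
        (\<integral>\<^sup>+ x. rel_rho Phi mu x \<partial>lborel) < \<infinity>"
  then show "\<exists>mu_inf. (mu \<longlongrightarrow> mu_inf) at_top \<and>
             (AE z in lborel. fst z > exp mu_inf \<and> snd z > 0 \<longrightarrow> Phi z = 0)"
    using part_b[OF Phi_meas Phi_nonneg, of lam lam' mu mu'] by blast
qed

end
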